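(* Let $\mathcal{N}$ be the class of matroids having no minor isomorphic to $\mathsf{U}_{1,1}\oplus\mathsf{U}_{1,3}$ nor to $\mathsf{U}_{0,1}\oplus\mathsf{U}_{2,3}$, and let $\mathsf{M}\in\mathcal{N}$ be a matroid on $n$ elements. Then either (i) $\mathsf{M}$ is connected and sparse paving, or (ii) $\mathsf{M}$ is disconnected and isomorphic to one of the following: $\mathsf{U}_{0,n-k-\ell}\oplus(\mathsf{U}_{1,2})^{\oplus\ell}\oplus\mathsf{U}_{k-\ell,k-\ell}$ for some $0\le k\le n$ and $0\le\ell\le\min\{k,n-k\}$; $\mathsf{U}_{0,n-\ell}\oplus\mathsf{U}_{1,\ell}$ for some $3\le\ell\le n-1$; or $\mathsf{U}_{\ell-1,\ell}\oplus\mathsf{U}_{n-\ell,n-\ell}$ for some $3\le\ell\le n-1$.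
   Context: $\mathsf{U}_{r,m}$ is the uniform matroid of rank $r$ on $m$ elements. A matroid is sparse paving if it has no minor isomorphic to $\mathsf{U}_{0,1}\oplus\mathsf{U}_{2,2}$ or $\mathsf{U}_{0,2}\oplus\mathsf{U}_{1,1}$. *)

theory Defs
  imports Main
begin

type_synonym 'a matroid = "'a set \<times> ('a set \<Rightarrow> bool)"

definition ground :: "'a matroid \<Rightarrow> 'a set" where
  "ground M = fst M"

definition indep :: "'a matroid \<Rightarrow> 'a set \<Rightarrow> bool" where
  "indep M = snd M"

definition matroid :: "'a matroid \<Rightarrow> bool" where
  "matroid M \<longleftrightarrow>
     finite (ground M) \<and>
     indep M {} \<and>
     (\<forall>I. indep M I \<longrightarrow> I \<subseteq> ground M) \<and>
     (\<forall>I J. indep M J \<and> I \<subseteq> J \<longrightarrow> indep M I) \<and>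
     (\<forall>I J. indep M I \<and> indep M J \<and> card I < card J \<longrightarrow>
        (\<exists>x \<in> J - I. indep M (insert x I)))"

definition rank :: "'a matroid \<Rightarrow> 'a set \<Rightarrow> nat" where
  "rank M X = Max (card ` {I. I \<subseteq> X \<and> indep M I})"

text \<open>The minor (M / C) \ D, where the remaining ground set is E' = E - C - D.\<close>
definition minor_of :: "'a matroid \<Rightarrow> 'a set \<Rightarrow> 'a set \<Rightarrow> 'a matroid" where
  "minor_of M C E' = (E', \<lambda>I. I \<subseteq> E' \<and> rank M (I \<union> C) = card I + rank M C)"

definition is_minor :: "'a matroid \<Rightarrow> 'a matroid \<Rightarrow> bool" where
  "is_minor N M \<longleftrightarrow> (\<exists>C E'. C \<subseteq> ground M \<and> E' \<subseteq> ground M - C \<and> N = minor_of M C E')"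

definition iso :: "'a matroid \<Rightarrow> 'b matroid \<Rightarrow> bool" where
  "iso M N \<longleftrightarrow> (\<exists>f. bij_betw f (ground M) (ground N) \<and>
      (\<forall>I \<subseteq> ground M. indep M I \<longleftrightarrow> indep N (f ` I)))"

definition has_minor_iso :: "'a matroid \<Rightarrow> 'b matroid \<Rightarrow> bool" where
  "has_minor_iso M N \<longleftrightarrow> (\<exists>M'. is_minor M' M \<and> iso M' N)"

definition U :: "nat \<Rightarrow> nat \<Rightarrow> nat matroid" where
  "U r m = ({0..<m}, \<lambda>I. I \<subseteq> {0..<m} \<and> card I \<le> r)"

definition dsum :: "'a matroid list \<Rightarrow> (nat \<times> 'a) matroid" where
  "dsum Ms = ((\<Union>i<length Ms. {i} \<times> ground (Ms ! i)),
     \<lambda>I. I \<subseteq> (\<Union>i<length Ms. {i} \<times> ground (Ms ! i)) \<and>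
         (\<forall>i<length Ms. indep (Ms ! i) {x. (i, x) \<in> I}))"

definition circuit :: "'a matroid \<Rightarrow> 'a set \<Rightarrow> bool" where
  "circuit M C \<longleftrightarrow> C \<subseteq> ground M \<and> \<not> indep M C \<and> (\<forall>D. D \<subset> C \<longrightarrow> indep M D)"

definition connected :: "'a matroid \<Rightarrow> bool" where
  "connected M \<longleftrightarrow> (\<forall>x \<in> ground M. \<forall>y \<in> ground M. x \<noteq> y \<longrightarrow>
      (\<exists>C. circuit M C \<and> x \<in> C \<and> y \<in> C))"

definition sparse_paving :: "'a matroid \<Rightarrow> bool" where
  "sparse_paving M \<longleftrightarrow> \<not> has_minor_iso M (dsum [U 0 1, U 2 2]) \<and>
                        \<not> has_minor_iso M (dsum [U 0 2, U 1 1])"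

end

theory Submission
  imports Defs
begin


locale mat =
  fixes M :: "'a matroid"
  assumes wf: "matroid M"
begin

abbreviation "E \<equiv> ground M"
abbreviation "ind \<equiv> indep M"
abbreviation "r \<equiv> rank M"

lemma finE: "finite E" using wf unfolding matroid_def by blast
lemma ind_empty: "ind {}" using wf unfolding matroid_def by blast
lemma ind_sub: "ind I \<Longrightarrow> I \<subseteq> E" using wf unfolding matroid_def by blast
lemma ind_mono: "ind J \<Longrightarrow> I \<subseteq> J \<Longrightarrow> ind I" using wf unfolding matroid_def by blast
lemma augment: "ind I \<Longrightarrow> ind J \<Longrightarrow> card I < card J \<Longrightarrow> \<exists>x\<in>J - I. ind (insert x I)"
  using wf unfolding matroid_def by blast
lemma ind_fin: "ind I \<Longrightarrow> finite I" using ind_sub finE finite_subset by blast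

lemma rank_set_fin: "finite (card ` {I. I \<subseteq> X \<and> ind I})"
proof -
  have "{I. I \<subseteq> X \<and> ind I} \<subseteq> Pow E" using ind_sub by blast
  then have "finite {I. I \<subseteq> X \<and> ind I}" using finE by (meson finite_Pow_iff finite_subset)
  then show ?thesis by simp
qed

lemma rank_ex: "\<exists>I. I \<subseteq> X \<and> ind I \<and> card I = r X"
proof -
  have ne: "card ` {I. I \<subseteq> X \<and> ind I} \<noteq> {}" using ind_empty by blast
  have "r X \<in> card ` {I. I \<subseteq> X \<and> ind I}"
    unfolding rank_def using Max_in[OF rank_set_fin ne] .
  then show ?thesis by auto
qed

lemma rank_ge: "I \<subseteq> X \<Longrightarrow> ind I \<Longrightarrow> card I \<le> r X"
  unfolding rank_def using rank_set_fin by (intro Max_ge) auto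

lemma extend:
  assumes "J \<subseteq> X" "ind J"
  shows "\<exists>I. J \<subseteq> I \<and> I \<subseteq> X \<and> ind I \<and> card I = r X"
proof -
  let ?P = "\<lambda>I. J \<subseteq> I \<and> I \<subseteq> X \<and> ind I"
  obtain I where I: "?P I" and Imax: "\<And>I'. ?P I' \<Longrightarrow> card E - card I \<le> card E - card I'"
    using ex_has_least_nat[of ?P J "\<lambda>I. card E - card I"] assms by blast
  have "card I \<le> r X" using I rank_ge by blast
  moreover have "\<not> card I < r X"
  proof
    assume lt: "card I < r X"
    obtain I0 where I0: "I0 \<subseteq> X" "ind I0" "card I0 = r X" using rank_ex by blast
    then obtain x where x: "x \<in> I0 - I" "ind (insert x I)" using augment[of I I0] I lt by auto
    have P': "?P (insert x I)" using x I I0 by auto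
    have "card (insert x I) = card I + 1" using x ind_fin I by auto
    moreover have "card (insert x I) \<le> card E" using ind_sub[OF x(2)] finE card_mono by blast
    ultimately show False using Imax[OF P'] by linarith
  qed
  ultimately show ?thesis using I by auto
qed

lemma rank_ind: "ind I \<Longrightarrow> r I = card I"
proof -
  assume "ind I"
  obtain I0 where "I0 \<subseteq> I" "ind I0" "card I0 = r I" using rank_ex by blast
  then show ?thesis using rank_ge[of I I] \<open>ind I\<close> ind_fin card_mono by (metis le_antisym order_refl)
qed

lemma rank_le_card: "finite X \<Longrightarrow> r X \<le> card X"
  using rank_ex card_mono by metis

lemma rank_le_cardE: "r X \<le> card (X \<inter> E)"
proof -
  obtain I where "I \<subseteq> X" "ind I" "card I = r X" using rank_ex by blast
  then show ?thesis using ind_sub finE by (metis card_mono finite_Int le_inf_iff)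
qed

lemma rank_mono: "X \<subseteq> Y \<Longrightarrow> r X \<le> r Y"
  using rank_ex rank_ge by (metis order_trans)

lemma rank_IntE: "r X = r (X \<inter> E)"
proof -
  obtain I where "I \<subseteq> X" "ind I" "card I = r X" using rank_ex by blast
  then have "I \<subseteq> X \<inter> E" using ind_sub by auto
  then have "r X \<le> r (X \<inter> E)" using rank_ge \<open>ind I\<close> \<open>card I = r X\<close> by metis
  then show ?thesis using rank_mono[of "X \<inter> E" X] by auto
qed

lemma ind_iff_rank: "I \<subseteq> E \<Longrightarrow> ind I \<longleftrightarrow> r I = card I"
proof
  assume "ind I" then show "r I = card I" by (rule rank_ind)
next
  assume IE: "I \<subseteq> E" and rc: "r I = card I"
  obtain I0 where I0: "I0 \<subseteq> I" "ind I0" "card I0 = r I" using rank_ex by blast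
  have "finite I" using IE finE finite_subset by blast
  then have "I0 = I" using I0 rc card_subset_eq by metis
  then show "ind I" using I0 by simp
qed

lemma submod: "r (A \<union> B) + r (A \<inter> B) \<le> r A + r B"
proof -
  obtain I where I: "I \<subseteq> A \<inter> B" "ind I" "card I = r (A \<inter> B)" using rank_ex by blast
  obtain J where J: "I \<subseteq> J" "J \<subseteq> A \<union> B" "ind J" "card J = r (A \<union> B)"
    using extend[of I "A \<union> B"] I by auto
  have fJ: "finite J" using J ind_fin by blast
  have "card (J \<inter> A) \<le> r A" using J ind_mono rank_ge by (meson inf_le1 inf_le2)
  moreover have "card (J \<inter> B) \<le> r B" using J ind_mono rank_ge by (meson inf_le1 inf_le2)
  moreover have "card (J \<inter> A \<inter> B) \<ge> card I"
    using I J fJ by (intro card_mono) auto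
  moreover have "card (J \<inter> A) + card (J \<inter> B) = card J + card (J \<inter> A \<inter> B)"
  proof -
    have "J = (J \<inter> A) \<union> (J \<inter> B)" using J by auto
    then have "card J = card ((J \<inter> A) \<union> (J \<inter> B))" by simp
    moreover have e3: "(J \<inter> A) \<inter> (J \<inter> B) = J \<inter> A \<inter> B" by auto
    moreover have "card (J \<inter> A) + card (J \<inter> B) = card ((J \<inter> A) \<union> (J \<inter> B)) + card ((J \<inter> A) \<inter> (J \<inter> B))"
      using fJ by (intro card_Un_Int) auto
    ultimately show ?thesis by simp
  qed
  ultimately show ?thesis using I J by linarith
qed

lemma rank_insert_le: "r (insert y S) \<le> r S + 1"
proof -
  obtain I where I: "I \<subseteq> insert y S" "ind I" "card I = r (insert y S)" using rank_ex by blast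
  have "I - {y} \<subseteq> S" "ind (I - {y})" using I ind_mono by auto
  then have "card (I - {y}) \<le> r S" using rank_ge by blast
  moreover have "card I \<le> card (I - {y}) + 1"
  proof -
    have "finite I" using I ind_fin by blast
    then show ?thesis by (cases "y \<in> I") (auto simp: card_Diff_singleton_if)
  qed
  ultimately show ?thesis using I by linarith
qed

lemma cl_mono:
  assumes "r (insert y S) = r S" "S \<subseteq> T"
  shows "r (insert y T) = r T"
proof -
  have eq: "insert y S \<union> T = insert y T" using assms by auto
  have "r (insert y T) + r (insert y S \<inter> T) \<le> r (insert y S) + r T"
    using submod[of "insert y S" T] unfolding eq .
  moreover have "r S \<le> r (insert y S \<inter> T)" using assms by (intro rank_mono) auto
  ultimately have "r (insert y T) \<le> r T" using assms by linarith
  moreover have "r T \<le> r (insert y T)" by (rule rank_mono) auto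
  ultimately show ?thesis by linarith
qed

lemma span_union:
  assumes "finite T" "\<forall>t\<in>T. r (insert t S) = r S"
  shows "r (S \<union> T) = r S"
  using assms
proof (induction T rule: finite_induct)
  case empty then show ?case by simp
next
  case (insert t T)
  then have h: "r (S \<union> T) = r S" by auto
  have "r (insert t (S \<union> T)) = r (S \<union> T)" using insert cl_mono[of t S "S \<union> T"] by auto
  then show ?case using h by simp
qed


abbreviation "circ \<equiv> circuit M"

lemma circ_sub: "circ K \<Longrightarrow> K \<subseteq> E" unfolding circuit_def by blast
lemma circ_dep: "circ K \<Longrightarrow> \<not> ind K" unfolding circuit_def by blast
lemma circ_min: "circ K \<Longrightarrow> D \<subset> K \<Longrightarrow> ind D" unfolding circuit_def by blast
lemma circ_fin: "circ K \<Longrightarrow> finite K" using circ_sub finE finite_subset by blast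
lemma circ_ne: "circ K \<Longrightarrow> K \<noteq> {}" using circ_dep ind_empty by blast
lemma circ_del: "circ K \<Longrightarrow> e \<in> K \<Longrightarrow> ind (K - {e})" using circ_min by blast

lemma circ_rank: assumes "circ K" shows "r K = card K - 1" and "e \<in> K \<Longrightarrow> r (K - {e}) = card K - 1"
proof -
  have fK: "finite K" using assms circ_fin by blast
  obtain e0 where e0: "e0 \<in> K" using circ_ne assms by blast
  have a: "\<And>e. e \<in> K \<Longrightarrow> r (K - {e}) = card K - 1"
    using circ_del[OF assms] rank_ind fK by (simp add: card_Diff_singleton)
  have "r K < card K" using assms circ_sub circ_dep ind_iff_rank rank_le_card fK
    by (metis le_neq_implies_less)
  moreover have "r (K - {e0}) \<le> r K" by (rule rank_mono) auto
  ultimately show "r K = card K - 1" using a[OF e0] by linarith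
  show "e \<in> K \<Longrightarrow> r (K - {e}) = card K - 1" by (rule a)
qed

lemma circ_span: assumes "circ K" "e \<in> K" "K - {e} \<subseteq> S" shows "r (insert e S) = r S"
proof -
  have "insert e (K - {e}) = K" using assms by auto
  then have "r (insert e (K - {e})) = r (K - {e})" using circ_rank[OF assms(1)] assms(2) by simp
  then show ?thesis using cl_mono assms(3) by blast
qed

lemma circ_incomp: "circ K1 \<Longrightarrow> circ K2 \<Longrightarrow> K1 \<subseteq> K2 \<Longrightarrow> K1 = K2"
  using circ_min circ_dep by blast

lemma dep_circ: assumes "X \<subseteq> E" "\<not> ind X" shows "\<exists>K. K \<subseteq> X \<and> circ K"
proof -
  let ?P = "\<lambda>D. D \<subseteq> X \<and> \<not> ind D"
  have P0: "?P X" using assms by blast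
  obtain D where D: "?P D" and Dmin: "\<And>D'. ?P D' \<Longrightarrow> card D \<le> card D'"
    using ex_has_least_nat[of ?P X card, OF P0] by blast
  have DE: "D \<subseteq> E" using D assms by blast
  then have fD: "finite D" using finE by (rule finite_subset)
  have "circ D" unfolding circuit_def
  proof (intro conjI allI impI)
    show "D \<subseteq> E" by (rule DE)
    show "\<not> ind D" using D by blast
    fix D' assume "D' \<subset> D"
    then have "card D' < card D" using fD psubset_card_mono by blast
    show "ind D'"
    proof (rule ccontr)
      assume "\<not> ind D'"
      then have "?P D'" using D \<open>D' \<subset> D\<close> by blast
      then show False using Dmin[of D'] \<open>card D' < card D\<close> by linarith
    qed
  qed
  then show ?thesis using D by blast
qed

lemma ind_nocirc: assumes "X \<subseteq> E" shows "ind X \<longleftrightarrow> (\<forall>K. circ K \<longrightarrow> \<not> K \<subseteq> X)"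
proof
  assume "ind X" then show "\<forall>K. circ K \<longrightarrow> \<not> K \<subseteq> X" using ind_mono circ_dep by metis
next
  assume "\<forall>K. circ K \<longrightarrow> \<not> K \<subseteq> X" then show "ind X" using dep_circ[OF assms] by blast
qed

lemma span_circ:
  assumes "S \<subseteq> E" "y \<in> E" "y \<notin> S" "r (insert y S) = r S"
  shows "\<exists>K. circ K \<and> y \<in> K \<and> K \<subseteq> insert y S"
proof -
  obtain I where I: "I \<subseteq> S" "ind I" "card I = r S" using rank_ex by blast
  have fI: "finite I" using I ind_fin by blast
  have "r (insert y I) \<le> r (insert y S)" using I by (intro rank_mono) auto
  moreover have "y \<notin> I" using I assms(3) by blast
  then have "card (insert y I) = card I + 1" using fI by simp
  ultimately have "\<not> ind (insert y I)"
  proof -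
    assume a1: "r (insert y I) \<le> r (insert y S)" and a2: "card (insert y I) = card I + 1"
    show ?thesis
    proof
      assume "ind (insert y I)"
      then have "r (insert y I) = card (insert y I)" by (rule rank_ind)
      then show False using a1 a2 I assms(4) by linarith
    qed
  qed
  moreover have "insert y I \<subseteq> E" using I assms by blast
  ultimately obtain K where K: "K \<subseteq> insert y I" "circ K" using dep_circ by blast
  have "y \<in> K" using K I ind_mono circ_dep by (metis subset_insert)
  then show ?thesis using K I by blast
qed

lemma strong_elim:
  assumes "circ K1" "circ K2" "e \<in> K1" "e \<in> K2" "f \<in> K1" "f \<notin> K2"
  shows "\<exists>K3. circ K3 \<and> f \<in> K3 \<and> K3 \<subseteq> (K1 \<union> K2) - {e}"
proof -
  define S where "S = (K1 \<union> K2) - {e, f}"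
  have ef: "e \<noteq> f" using assms by blast
  have "K1 \<union> K2 \<subseteq> E" using circ_sub assms(1,2) by blast
  then have SE: "S \<subseteq> E" unfolding S_def by blast
  have "K2 - {e} \<subseteq> S" using assms(6) unfolding S_def by blast
  then have 1: "r (insert e S) = r S" by (rule circ_span[OF assms(2) assms(4)])
  have "K1 - {f} \<subseteq> insert e S" unfolding S_def by blast
  then have 2: "r (insert f (insert e S)) = r (insert e S)" by (rule circ_span[OF assms(1) assms(5)])
  have "r (insert f S) \<le> r (insert f (insert e S))" by (rule rank_mono) auto
  moreover have "r S \<le> r (insert f S)" by (rule rank_mono) auto
  ultimately have "r (insert f S) = r S" using 1 2 by linarith
  moreover have "f \<in> E" using circ_sub assms(1,5) by blast
  moreover have "f \<notin> S" unfolding S_def by blast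
  ultimately obtain K where "circ K" "f \<in> K" "K \<subseteq> insert f S"
    using span_circ[OF SE] by blast
  moreover have "insert f S \<subseteq> (K1 \<union> K2) - {e}" unfolding S_def using ef assms(5) by blast
  ultimately show ?thesis by blast
qed

definition cc where "cc x y \<longleftrightarrow> x = y \<or> (\<exists>K. circ K \<and> x \<in> K \<and> y \<in> K)"

lemma trans_aux:
  assumes "circ K1" "circ K2" "x \<in> K1" "z \<in> K2" "K1 \<inter> K2 \<noteq> {}"
  shows "\<exists>K. circ K \<and> x \<in> K \<and> z \<in> K"
  using assms
proof (induction "card (K1 \<union> K2)" arbitrary: K1 K2 rule: less_induct)
  case less
  show ?case
  proof (cases "z \<in> K1 \<or> x \<in> K2")
    case True then show ?thesis using less by blast
  next
    case False
    obtain e where e: "e \<in> K1" "e \<in> K2" using less by blast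
    obtain K3 where K3: "circ K3" "x \<in> K3" "K3 \<subseteq> (K1 \<union> K2) - {e}"
      using strong_elim[of K1 K2 e x] less e False by blast
    show ?thesis
    proof (cases "z \<in> K3")
      case True then show ?thesis using K3 by blast
    next
      case zK3: False
      have "\<not> K3 \<subseteq> K1" using circ_incomp[of K3 K1] K3 less e by blast
      then obtain w where w: "w \<in> K3" "w \<notin> K1" by blast
      then have wK2: "w \<in> K2" using K3 by blast
      obtain K4 where K4: "circ K4" "z \<in> K4" "K4 \<subseteq> (K2 \<union> K3) - {w}"
        using strong_elim[of K2 K3 w z] less w wK2 zK3 K3 by blast
      show ?thesis
      proof (cases "x \<in> K4")
        case True then show ?thesis using K4 less by blast
      next
        case xK4: False
        have ne: "K1 \<inter> K4 \<noteq> {}"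
        proof
          assume "K1 \<inter> K4 = {}"
          then have "K4 \<subseteq> K2" using K4 K3 by blast
          then have "K4 = K2" using circ_incomp K4 less by blast
          then show False using K4 wK2 by blast
        qed
        have sub: "K1 \<union> K4 \<subset> K1 \<union> K2" using K4 K3 w wK2 by blast
        have "finite (K1 \<union> K2)" using less circ_fin by blast
        then have "card (K1 \<union> K4) < card (K1 \<union> K2)" by (rule psubset_card_mono[OF _ sub])
        then show ?thesis using less(1)[of K1 K4] less K4 ne by blast
      qed
    qed
  qed
qed

lemma cc_trans: "cc x y \<Longrightarrow> cc y z \<Longrightarrow> cc x z"
  unfolding cc_def using trans_aux by blast

lemma cc_sym: "cc x y \<Longrightarrow> cc y x" unfolding cc_def by blast

end


lemma ground_dsum: "ground (dsum Ms) = (\<Union>i<length Ms. {i} \<times> ground (Ms ! i))"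
  unfolding dsum_def ground_def by simp

lemma indep_dsum: "indep (dsum Ms) I \<longleftrightarrow> I \<subseteq> ground (dsum Ms) \<and> (\<forall>i<length Ms. indep (Ms ! i) {x. (i, x) \<in> I})"
  unfolding dsum_def ground_def indep_def by simp

lemma ground_U: "ground (U k m) = {0..<m}" unfolding U_def ground_def by simp
lemma indep_U: "indep (U k m) X \<longleftrightarrow> X \<subseteq> {0..<m} \<and> card X \<le> k" unfolding U_def indep_def by simp

lemma ground_minor: "ground (minor_of M C E') = E'" unfolding minor_of_def ground_def by simp
lemma indep_minor: "indep (minor_of M C E') I \<longleftrightarrow> I \<subseteq> E' \<and> rank M (I \<union> C) = card I + rank M C"
  unfolding minor_of_def indep_def by simp

lemma dsum_iso:
  fixes N :: "'b matroid" and Ms :: "'c matroid list"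
  assumes bij: "\<And>i. i < length Ms \<Longrightarrow> bij_betw (h i) (ground (Ms ! i)) (B i)"
    and disj: "\<And>i j. i < length Ms \<Longrightarrow> j < length Ms \<Longrightarrow> i \<noteq> j \<Longrightarrow> B i \<inter> B j = {}"
    and cover: "(\<Union>i<length Ms. B i) = ground N"
    and ind: "\<And>I. I \<subseteq> ground N \<Longrightarrow> indep N I \<longleftrightarrow> (\<forall>i<length Ms. indep (Ms ! i) {x \<in> ground (Ms ! i). h i x \<in> I})"
  shows "iso N (dsum Ms)"
proof -
  define G where "G = ground (dsum Ms)"
  have G: "G = (\<Union>i<length Ms. {i} \<times> ground (Ms ! i))" unfolding G_def by (rule ground_dsum)
  define H where "H = (\<lambda>(i, x). h i x)"
  have injH: "inj_on H G"
  proof (rule inj_onI)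
    fix u v assume u: "u \<in> G" and v: "v \<in> G" and huv: "H u = H v"
    obtain i x where ux: "u = (i, x)" "i < length Ms" "x \<in> ground (Ms ! i)" using u G by auto
    obtain j y where vy: "v = (j, y)" "j < length Ms" "y \<in> ground (Ms ! j)" using v G by auto
    have hi: "h i x \<in> B i" using bij[OF ux(2)] ux(3) bij_betw_apply by fast
    have hj: "h j y \<in> B j" using bij[OF vy(2)] vy(3) bij_betw_apply by fast
    have hxy: "h i x = h j y" using huv ux vy H_def by simp
    have ij: "i = j"
    proof (rule ccontr)
      assume "i \<noteq> j"
      then have "B i \<inter> B j = {}" using disj ux vy by blast
      moreover have "h i x \<in> B i \<inter> B j" using hi hj hxy by simp
      ultimately show False by simp
    qed
    then have "x = y" using bij[OF ux(2)] ux(3) vy(3) hxy unfolding bij_betw_def inj_on_def by blast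
    then show "u = v" using ux vy ij by simp
  qed
  have imH: "H ` G = ground N"
  proof
    show "H ` G \<subseteq> ground N"
    proof
      fix w assume "w \<in> H ` G"
      then obtain i x where "i < length Ms" "x \<in> ground (Ms ! i)" "w = h i x" using G H_def by auto
      then have "w \<in> B i" using bij bij_betw_apply by fast
      then show "w \<in> ground N" using cover \<open>i < length Ms\<close> by blast
    qed
  next
    show "ground N \<subseteq> H ` G"
    proof
      fix w assume "w \<in> ground N"
      then obtain i where i: "i < length Ms" "w \<in> B i" using cover by blast
      then obtain x where "x \<in> ground (Ms ! i)" "w = h i x"
        using bij[OF i(1)] unfolding bij_betw_def by blast
      then show "w \<in> H ` G" using G H_def i by force
    qed
  qed
  have bijH: "bij_betw H G (ground N)" using injH imH unfolding bij_betw_def by blast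
  define f where "f = inv_into G H"
  have bijf: "bij_betw f (ground N) G" unfolding f_def using bijH by (rule bij_betw_inv_into)
  show ?thesis unfolding iso_def
  proof (intro exI conjI allI impI)
    show "bij_betw f (ground N) (ground (dsum Ms))" using bijf G_def by simp
    fix I assume IN: "I \<subseteq> ground N"
    have fIG: "f ` I \<subseteq> G" using bijf IN bij_betw_imp_surj_on by blast
    have key: "\<And>i. i < length Ms \<Longrightarrow> {x. (i, x) \<in> f ` I} = {x \<in> ground (Ms ! i). h i x \<in> I}"
    proof -
      fix i assume i: "i < length Ms"
      show "{x. (i, x) \<in> f ` I} = {x \<in> ground (Ms ! i). h i x \<in> I}"
      proof (intro equalityI subsetI)
        fix x assume "x \<in> {x. (i, x) \<in> f ` I}"
        then obtain w where w: "w \<in> I" "(i, x) = f w" by blast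
        have "w \<in> ground N" using w IN by blast
        then have "H (f w) = w" unfolding f_def using imH by (simp add: f_inv_into_f)
        then have "h i x = w" using w H_def by (metis case_prod_conv)
        moreover have "(i, x) \<in> G" using w fIG by blast
        ultimately show "x \<in> {x \<in> ground (Ms ! i). h i x \<in> I}" using G w by auto
      next
        fix x assume x: "x \<in> {x \<in> ground (Ms ! i). h i x \<in> I}"
        have ixG: "(i, x) \<in> G" using x i G by blast
        have "f (H (i, x)) = (i, x)" unfolding f_def using injH ixG by (simp add: inv_into_f_f)
        moreover have "H (i, x) \<in> I" using x H_def by simp
        ultimately show "x \<in> {x. (i, x) \<in> f ` I}" by (metis (no_types, lifting) image_eqI mem_Collect_eq)
      qed
    qed
    have "indep (dsum Ms) (f ` I) \<longleftrightarrow> (\<forall>i<length Ms. indep (Ms ! i) {x. (i, x) \<in> f ` I})"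
      using indep_dsum fIG G_def by blast
    also have "\<dots> \<longleftrightarrow> (\<forall>i<length Ms. indep (Ms ! i) {x \<in> ground (Ms ! i). h i x \<in> I})"
      using key by simp
    also have "\<dots> \<longleftrightarrow> indep N I" using ind[OF IN] by simp
    finally show "indep N I \<longleftrightarrow> indep (dsum Ms) (f ` I)" by simp
  qed
qed

lemma card_preim:
  assumes "bij_betw h A B"
  shows "card {x \<in> A. h x \<in> I} = card (I \<inter> B)"
proof -
  have "h ` {x \<in> A. h x \<in> I} = I \<inter> B" using assms unfolding bij_betw_def by auto
  moreover have "inj_on h {x \<in> A. h x \<in> I}"
    using assms unfolding bij_betw_def by (rule inj_on_subset[OF conjunct1]) blast
  ultimately show ?thesis using card_image by fastforce
qed

lemma dsumU_iso:
  fixes N :: "'b matroid"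
  assumes len: "length Ms = k"
    and Ms: "\<And>i. i < k \<Longrightarrow> Ms ! i = U (rk i) (card (B i))"
    and fin: "\<And>i. i < k \<Longrightarrow> finite (B i)"
    and disj: "\<And>i j. i < k \<Longrightarrow> j < k \<Longrightarrow> i \<noteq> j \<Longrightarrow> B i \<inter> B j = {}"
    and cover: "(\<Union>i<k. B i) = ground N"
    and ind: "\<And>I. I \<subseteq> ground N \<Longrightarrow> indep N I \<longleftrightarrow> (\<forall>i<k. card (I \<inter> B i) \<le> rk i)"
  shows "iso N (dsum Ms)"
proof -
  have "\<forall>i. \<exists>g. i < k \<longrightarrow> bij_betw g {0..<card (B i)} (B i)"
    using fin ex_bij_betw_nat_finite by blast
  then obtain h where h: "\<And>i. i < k \<Longrightarrow> bij_betw (h i) {0..<card (B i)} (B i)" by metis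
  show ?thesis
  proof (rule dsum_iso[where h = h and B = B])
    fix i assume "i < length Ms"
    then show "bij_betw (h i) (ground (Ms ! i)) (B i)" using h Ms len ground_U by auto
  next
    fix i j assume "i < length Ms" "j < length Ms" "i \<noteq> j"
    then show "B i \<inter> B j = {}" using disj len by auto
  next
    show "(\<Union>i<length Ms. B i) = ground N" using cover len by simp
  next
    fix I assume IN: "I \<subseteq> ground N"
    have "\<And>i. i < k \<Longrightarrow> indep (Ms ! i) {x \<in> ground (Ms ! i). h i x \<in> I} \<longleftrightarrow> card (I \<inter> B i) \<le> rk i"
    proof -
      fix i assume i: "i < k"
      have "card {x \<in> {0..<card (B i)}. h i x \<in> I} = card (I \<inter> B i)" using card_preim h[OF i] by blast
      then show "indep (Ms ! i) {x \<in> ground (Ms ! i). h i x \<in> I} \<longleftrightarrow> card (I \<inter> B i) \<le> rk i"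
        using Ms[OF i] by (auto simp: indep_U ground_U)
    qed
    then show "indep N I \<longleftrightarrow> (\<forall>i<length Ms. indep (Ms ! i) {x \<in> ground (Ms ! i). h i x \<in> I})"
      using ind[OF IN] len by auto
  qed
qed


lemma card3: "distinct [a, b, c] \<Longrightarrow> card {a, b, c} = 3" by simp

lemma card_le2_iff: assumes "distinct [a, b, c]" shows "card (I \<inter> {a, b, c}) \<le> 2 \<longleftrightarrow> \<not> {a, b, c} \<subseteq> I"
proof
  assume le: "card (I \<inter> {a, b, c}) \<le> 2"
  show "\<not> {a, b, c} \<subseteq> I"
  proof
    assume "{a, b, c} \<subseteq> I"
    then have "I \<inter> {a, b, c} = {a, b, c}" by blast
    then show False using le card3[OF assms] by simp
  qed
next
  assume "\<not> {a, b, c} \<subseteq> I"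
  then have "I \<inter> {a, b, c} \<subset> {a, b, c}" by blast
  then have "card (I \<inter> {a, b, c}) < card {a, b, c}" by (rule psubset_card_mono[rotated]) simp
  then show "card (I \<inter> {a, b, c}) \<le> 2" using card3[OF assms] by simp
qed

context mat
begin

lemma minor_iso_intro: "C \<subseteq> E \<Longrightarrow> E' \<subseteq> E - C \<Longrightarrow> iso (minor_of M C E') N \<Longrightarrow> has_minor_iso M N"
  unfolding has_minor_iso_def is_minor_def by blast

lemma F1_rank:
  assumes noF1: "\<not> has_minor_iso M (dsum [U 0 1, U 2 3])"
    and Z: "Z \<subseteq> E" and el: "{x, a, b, c} \<subseteq> E" and dist: "distinct [x, a, b, c]"
    and nZ: "{x, a, b, c} \<inter> Z = {}"
    and cond: "\<And>I. I \<subseteq> {x, a, b, c} \<Longrightarrow> (r (I \<union> Z) = card I + r Z \<longleftrightarrow> x \<notin> I \<and> \<not> {a, b, c} \<subseteq> I)"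
  shows False
proof -
  define B where "B = (\<lambda>i::nat. if i = 0 then {x} else {a, b, c})"
  define rk where "rk = (\<lambda>i::nat. if i = 0 then 0::nat else 2)"
  have d3: "distinct [a, b, c]" using dist by simp
  have "iso (minor_of M Z {x, a, b, c}) (dsum [U 0 1, U 2 3])"
  proof (rule dsumU_iso[where k = 2 and B = B and rk = rk])
    show "length [U 0 1, U 2 3] = 2" by simp
    fix i :: nat assume "i < 2"
    then have "i = 0 \<or> i = 1" by auto
    then show "[U 0 1, U 2 3] ! i = U (rk i) (card (B i))" using card3[OF d3] B_def rk_def by auto
  next
    fix i :: nat assume "i < 2" then show "finite (B i)" using B_def by simp
  next
    fix i j :: nat assume "i < 2" "j < 2" "i \<noteq> j"
    then have "(i = 0 \<and> j = 1) \<or> (i = 1 \<and> j = 0)" by auto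
    then show "B i \<inter> B j = {}" using B_def dist by auto
  next
    have "{..<2::nat} = {0, 1}" by auto
    then have u: "(\<Union>i<2. B i) = B 0 \<union> B 1" by simp
    show "(\<Union>i<2. B i) = ground (minor_of M Z {x, a, b, c})" unfolding u ground_minor by (auto simp: B_def)
  next
    fix I assume "I \<subseteq> ground (minor_of M Z {x, a, b, c})"
    then have I: "I \<subseteq> {x, a, b, c}" using ground_minor by metis
    have "(\<forall>i<2. card (I \<inter> B i) \<le> rk i) \<longleftrightarrow> card (I \<inter> B 0) \<le> rk 0 \<and> card (I \<inter> B 1) \<le> rk 1"
      by (auto simp: less_Suc_eq numeral_2_eq_2)
    also have "\<dots> \<longleftrightarrow> x \<notin> I \<and> \<not> {a, b, c} \<subseteq> I"
      using card_le2_iff[OF d3, of I] B_def rk_def by auto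
    finally show "indep (minor_of M Z {x, a, b, c}) I \<longleftrightarrow> (\<forall>i<2. card (I \<inter> B i) \<le> rk i)"
      using cond[OF I] I indep_minor by metis
  qed
  moreover have "{x, a, b, c} \<subseteq> E - Z" using el nZ by blast
  ultimately show False using noF1 minor_iso_intro Z by blast
qed

lemma F2_rank:
  assumes noF2: "\<not> has_minor_iso M (dsum [U 1 1, U 1 3])"
    and Z: "Z \<subseteq> E" and el: "{z, a, b, c} \<subseteq> E" and dist: "distinct [z, a, b, c]"
    and nZ: "{z, a, b, c} \<inter> Z = {}"
    and cond: "\<And>I. I \<subseteq> {z, a, b, c} \<Longrightarrow> (r (I \<union> Z) = card I + r Z \<longleftrightarrow> card (I \<inter> {a, b, c}) \<le> 1)"
  shows False
proof -
  define B where "B = (\<lambda>i::nat. if i = 0 then {z} else {a, b, c})"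
  define rk where "rk = (\<lambda>i::nat. 1::nat)"
  have d3: "distinct [a, b, c]" using dist by simp
  have "iso (minor_of M Z {z, a, b, c}) (dsum [U 1 1, U 1 3])"
  proof (rule dsumU_iso[where k = 2 and B = B and rk = rk])
    show "length [U 1 1, U 1 3] = 2" by simp
    fix i :: nat assume "i < 2"
    then have "i = 0 \<or> i = 1" by auto
    then show "[U 1 1, U 1 3] ! i = U (rk i) (card (B i))" using card3[OF d3] B_def rk_def by auto
  next
    fix i :: nat assume "i < 2" then show "finite (B i)" using B_def by simp
  next
    fix i j :: nat assume "i < 2" "j < 2" "i \<noteq> j"
    then have "(i = 0 \<and> j = 1) \<or> (i = 1 \<and> j = 0)" by auto
    then show "B i \<inter> B j = {}" using B_def dist by auto
  next
    have "{..<2::nat} = {0, 1}" by auto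
    then have u: "(\<Union>i<2. B i) = B 0 \<union> B 1" by simp
    show "(\<Union>i<2. B i) = ground (minor_of M Z {z, a, b, c})" unfolding u ground_minor by (auto simp: B_def)
  next
    fix I assume "I \<subseteq> ground (minor_of M Z {z, a, b, c})"
    then have I: "I \<subseteq> {z, a, b, c}" using ground_minor by metis
    have "card (I \<inter> {z}) \<le> card {z}" by (rule card_mono) auto
    then have c1: "card (I \<inter> {z}) \<le> 1" by simp
    have "(\<forall>i<2. card (I \<inter> B i) \<le> rk i) \<longleftrightarrow> card (I \<inter> B 0) \<le> rk 0 \<and> card (I \<inter> B 1) \<le> rk 1"
      by (auto simp: less_Suc_eq numeral_2_eq_2)
    also have "\<dots> \<longleftrightarrow> card (I \<inter> {a, b, c}) \<le> 1"
      using c1 B_def rk_def by auto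
    finally show "indep (minor_of M Z {z, a, b, c}) I \<longleftrightarrow> (\<forall>i<2. card (I \<inter> B i) \<le> rk i)"
      using cond[OF I] I indep_minor by metis
  qed
  moreover have "{z, a, b, c} \<subseteq> E - Z" using el nZ by blast
  ultimately show False using noF2 minor_iso_intro Z by blast
qed

end


lemma if01: assumes "finite J" shows "((if J = {} then 0 else 1) = card J) \<longleftrightarrow> card J \<le> (1::nat)"
proof (cases "J = {}")
  case True then show ?thesis by simp
next
  case False
  then have "card J > 0" using assms by (simp add: card_gt_0_iff)
  then show ?thesis using False by auto
qed

lemma all2: "(\<forall>i<2::nat. P i) \<longleftrightarrow> P 0 \<and> P 1"
  by (auto simp: numeral_2_eq_2 less_Suc_eq)

lemma indep_dsum_i: "indep (dsum Ms) I \<Longrightarrow> i < length Ms \<Longrightarrow> indep (Ms ! i) {x. (i, x) \<in> I}"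
  by (simp add: indep_dsum)
lemma indep_dsum_intro: "I \<subseteq> ground (dsum Ms) \<Longrightarrow> (\<And>i. i < length Ms \<Longrightarrow> indep (Ms ! i) {x. (i, x) \<in> I}) \<Longrightarrow> indep (dsum Ms) I"
  by (simp add: indep_dsum)

lemma D1_g: "ground (dsum [U 0 1, U 2 2]) = {(0, 0), (1, 0), (1, 1)}"
  by (auto simp: ground_dsum ground_U less_Suc_eq numeral_2_eq_2)
lemma D1_a: "\<not> indep (dsum [U 0 1, U 2 2]) {(0, 0)}"
proof
  assume "indep (dsum [U 0 1, U 2 2]) {(0, 0)}"
  then have "indep ([U 0 1, U 2 2] ! 0) {x. (0, x) \<in> {(0::nat, 0::nat)}}" by (rule indep_dsum_i) simp
  moreover have "{x. (0::nat, x) \<in> {(0::nat, 0::nat)}} = {0}" by auto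
  ultimately have "indep (U 0 1) {0}" by (simp only: nth_Cons_0)
  then show False by (simp add: indep_U)
qed
lemma D1_b: "indep (dsum [U 0 1, U 2 2]) {(1, 0), (1, 1)}"
proof (rule indep_dsum_intro)
  show "{(1::nat, 0::nat), (1, 1)} \<subseteq> ground (dsum [U 0 1, U 2 2])" using D1_g by auto
  fix i assume "i < length [U 0 1, U 2 2]"
  then have "i = 0 \<or> i = 1" by auto
  moreover have e0: "{x. (0::nat, x) \<in> {(1::nat, 0::nat), (1, 1)}} = {}" by auto
  moreover have e1: "{x. (1::nat, x) \<in> {(1::nat, 0::nat), (1, 1)}} = {0, 1}" by auto
  moreover have "indep ([U 0 1, U 2 2] ! 0) {x. (0, x) \<in> {(1::nat, 0::nat), (1, 1)}}"
    unfolding e0 by (simp add: indep_U)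
  moreover have "indep ([U 0 1, U 2 2] ! 1) {x. (1, x) \<in> {(1::nat, 0::nat), (1, 1)}}"
    unfolding e1 by (simp add: indep_U)
  ultimately show "indep ([U 0 1, U 2 2] ! i) {x. (i, x) \<in> {(1, 0), (1, 1)}}" by blast
qed
lemma D2_g: "ground (dsum [U 0 2, U 1 1]) = {(0, 0), (0, 1), (1, 0)}"
  by (auto simp: ground_dsum ground_U less_Suc_eq numeral_2_eq_2)
lemma D2_a: "\<not> indep (dsum [U 0 2, U 1 1]) {(0, 0)}"
proof
  assume "indep (dsum [U 0 2, U 1 1]) {(0, 0)}"
  then have "indep ([U 0 2, U 1 1] ! 0) {x. (0, x) \<in> {(0::nat, 0::nat)}}" by (rule indep_dsum_i) simp
  moreover have "{x. (0::nat, x) \<in> {(0::nat, 0::nat)}} = {0}" by auto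
  ultimately have "indep (U 0 2) {0}" by (simp only: nth_Cons_0)
  then show False by (simp add: indep_U)
qed
lemma D2_b: "\<not> indep (dsum [U 0 2, U 1 1]) {(0, 1)}"
proof
  assume "indep (dsum [U 0 2, U 1 1]) {(0, 1)}"
  then have "indep ([U 0 2, U 1 1] ! 0) {x. (0, x) \<in> {(0::nat, 1::nat)}}" by (rule indep_dsum_i) simp
  moreover have "{x. (0::nat, x) \<in> {(0::nat, 1::nat)}} = {1}" by auto
  ultimately have "indep (U 0 2) {1}" by (simp only: nth_Cons_0)
  then show False by (simp add: indep_U)
qed
lemma D2_c: "indep (dsum [U 0 2, U 1 1]) {(1, 0)}"
proof (rule indep_dsum_intro)
  show "{(1::nat, 0::nat)} \<subseteq> ground (dsum [U 0 2, U 1 1])" using D2_g by auto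
  fix i assume "i < length [U 0 2, U 1 1]"
  then have "i = 0 \<or> i = 1" by auto
  moreover have e0: "{x. (0::nat, x) \<in> {(1::nat, 0::nat)}} = {}" by auto
  moreover have e1: "{x. (1::nat, x) \<in> {(1::nat, 0::nat)}} = {0}" by auto
  moreover have "indep ([U 0 2, U 1 1] ! 0) {x. (0, x) \<in> {(1::nat, 0::nat)}}"
    unfolding e0 by (simp add: indep_U)
  moreover have "indep ([U 0 2, U 1 1] ! 1) {x. (1, x) \<in> {(1::nat, 0::nat)}}"
    unfolding e1 by (simp add: indep_U)
  ultimately show "indep ([U 0 2, U 1 1] ! i) {x. (i, x) \<in> {(1, 0)}}" by blast
qed

lemma inv_pt:
  assumes "bij_betw \<phi> A B" "b \<in> B"
  shows "inv_into A \<phi> b \<in> A" "\<phi> (inv_into A \<phi> b) = b"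
  using assms by (auto simp: bij_betw_def inv_into_into f_inv_into_f)

context mat
begin

lemma F2_data:
  assumes noF2: "\<not> has_minor_iso M (dsum [U 1 1, U 1 3])"
    and Z: "Z \<subseteq> E" and el: "{z, a, b, c} \<subseteq> E" and dist: "distinct [z, a, b, c]"
    and nZ: "{z, a, b, c} \<inter> Z = {}"
    and sing: "\<And>y. y \<in> {a, b, c} \<Longrightarrow> r (insert y Z) = r Z + 1"
    and all: "r (Z \<union> {a, b, c}) = r Z + 1"
    and col: "\<And>S. S \<subseteq> {a, b, c} \<Longrightarrow> r (insert z (S \<union> Z)) = r (S \<union> Z) + 1"
  shows False
proof (rule F2_rank[OF noF2 Z el dist nZ])
  fix I assume I: "I \<subseteq> {z, a, b, c}"
  define J where "J = I - {z}"
  have J: "J \<subseteq> {a, b, c}" using I J_def by blast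
  have fJ: "finite J" by (rule finite_subset[OF J]) simp
  have rJ: "r (J \<union> Z) = r Z + (if J = {} then 0 else 1)"
  proof (cases "J = {}")
    case True then show ?thesis by simp
  next
    case False
    then obtain y where y: "y \<in> J" by blast
    have "r (insert y Z) \<le> r (J \<union> Z)" using y by (intro rank_mono) auto
    moreover have "r (J \<union> Z) \<le> r (Z \<union> {a, b, c})" using J by (intro rank_mono) auto
    moreover have "r (insert y Z) = r Z + 1" using sing y J by blast
    ultimately show ?thesis using all False by simp
  qed
  have IJ: "I \<inter> {a, b, c} = J" using J_def I dist by auto
  show "r (I \<union> Z) = card I + r Z \<longleftrightarrow> card (I \<inter> {a, b, c}) \<le> 1"
  proof (cases "z \<in> I")
    case True
    then have e1: "I \<union> Z = insert z (J \<union> Z)" using J_def by auto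
    have r1: "r (I \<union> Z) = r (J \<union> Z) + 1" unfolding e1 using col[OF J] by simp
    have IzJ: "I = insert z J" using True J_def by auto
    have "z \<notin> J" using J_def by blast
    then have "card (insert z J) = card J + 1" using fJ by simp
    then have c1: "card I = card J + 1" using IzJ by simp
    show ?thesis using r1 c1 rJ IJ if01[OF fJ] by auto
  next
    case False
    then have "I = J" using J_def by auto
    then show ?thesis using rJ IJ if01[OF fJ] by auto
  qed
qed

lemma ext_basis:
  assumes "C0 \<subseteq> E"
  shows "\<exists>B. B \<subseteq> C0 \<and> ind B \<and> card B = r C0 \<and> (\<forall>S. r (S \<union> B) = r (S \<union> C0))"
proof -
  obtain B where B: "B \<subseteq> C0" "ind B" "card B = r C0" using rank_ex by blast
  have fC0: "finite C0" using assms finE by (rule finite_subset)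
  have "\<forall>S. r (S \<union> B) = r (S \<union> C0)"
  proof
    fix S
    have sp: "\<forall>c\<in>C0. r (insert c (S \<union> B)) = r (S \<union> B)"
    proof
      fix c assume c: "c \<in> C0"
      have "r (insert c B) \<le> r C0" using c B by (intro rank_mono) auto
      moreover have "r B = r C0" using B rank_ind by simp
      moreover have "r B \<le> r (insert c B)" by (rule rank_mono) auto
      ultimately have "r (insert c B) = r B" by linarith
      then show "r (insert c (S \<union> B)) = r (S \<union> B)" by (rule cl_mono) auto
    qed
    have "r ((S \<union> B) \<union> C0) = r (S \<union> B)" by (rule span_union[OF fC0 sp])
    moreover have "r (S \<union> C0) \<le> r ((S \<union> B) \<union> C0)" by (rule rank_mono) auto
    moreover have "r (S \<union> B) \<le> r (S \<union> C0)" using B by (intro rank_mono) auto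
    ultimately show "r (S \<union> B) = r (S \<union> C0)" by linarith
  qed
  then show ?thesis using B by blast
qed

lemma get_minor:
  assumes "has_minor_iso M D"
  shows "\<exists>C E' \<phi>. C \<subseteq> E \<and> E' \<subseteq> E - C \<and> bij_betw \<phi> E' (ground D) \<and>
     (\<forall>I \<subseteq> E'. (I \<subseteq> E' \<and> r (I \<union> C) = card I + r C) \<longleftrightarrow> indep D (\<phi> ` I))"
proof -
  obtain M' where m1: "is_minor M' M" and m2: "iso M' D" using assms unfolding has_minor_iso_def by blast
  from m1 obtain C E' where C: "C \<subseteq> E" "E' \<subseteq> E - C" "M' = minor_of M C E'"
    unfolding is_minor_def by blast
  note C = C m2
  from C(4) obtain \<phi> where phi: "bij_betw \<phi> (ground M') (ground D)"
    "\<forall>I \<subseteq> ground M'. indep M' I \<longleftrightarrow> indep D (\<phi> ` I)" unfolding iso_def by blast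
  have gM: "ground M' = E'" using C(3) ground_minor by simp
  have iM: "\<And>I. indep M' I \<longleftrightarrow> I \<subseteq> E' \<and> r (I \<union> C) = card I + r C" using C(3) indep_minor by simp
  have "bij_betw \<phi> E' (ground D)" using phi(1) gM by simp
  moreover have "\<forall>I \<subseteq> E'. (I \<subseteq> E' \<and> r (I \<union> C) = card I + r C) \<longleftrightarrow> indep D (\<phi> ` I)"
    using phi(2) gM iM by simp
  ultimately show ?thesis using C(1,2) by blast
qed

lemma rank_cases: "r (insert x C) = r C \<or> r (insert x C) = r C + 1"
proof -
  have "r C \<le> r (insert x C)" by (rule rank_mono) auto
  then show ?thesis using rank_insert_le[of x C] by linarith
qed

lemma SP1:
  assumes "has_minor_iso M (dsum [U 0 1, U 2 2])"
  shows "\<exists>C x f g. C \<subseteq> E \<and> {x, f, g} \<subseteq> E - C \<and> distinct [x, f, g] \<and>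
     r (insert x C) = r C \<and> r (insert f (insert g C)) = r C + 2"
proof -
  from get_minor[OF assms] obtain C E' \<phi> where H: "C \<subseteq> E \<and> E' \<subseteq> E - C \<and> bij_betw \<phi> E' (ground (dsum [U 0 1, U 2 2])) \<and>
     (\<forall>I \<subseteq> E'. (I \<subseteq> E' \<and> r (I \<union> C) = card I + r C) \<longleftrightarrow> indep (dsum [U 0 1, U 2 2]) (\<phi> ` I))"
    by (elim exE) (rule that)
  then have C: "C \<subseteq> E" "E' \<subseteq> E - C" and bij: "bij_betw \<phi> E' (ground (dsum [U 0 1, U 2 2]))"
    and ind: "\<forall>I \<subseteq> E'. (I \<subseteq> E' \<and> r (I \<union> C) = card I + r C) \<longleftrightarrow> indep (dsum [U 0 1, U 2 2]) (\<phi> ` I)"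
    by simp_all
  define x where "x = inv_into E' \<phi> (0, 0)"
  define f where "f = inv_into E' \<phi> (1, 0)"
  define g where "g = inv_into E' \<phi> (1, 1)"
  have x: "x \<in> E'" "\<phi> x = (0, 0)" using inv_pt[OF bij] D1_g x_def by auto
  have f: "f \<in> E'" "\<phi> f = (1, 0)" using inv_pt[OF bij] D1_g f_def by auto
  have g: "g \<in> E'" "\<phi> g = (1, 1)" using inv_pt[OF bij] D1_g g_def by auto
  have dist: "distinct [x, f, g]" using x f g by auto
  have "\<not> (r ({x} \<union> C) = card {x} + r C)" using ind[rule_format, of "{x}"] x D1_a by auto
  then have rx: "r (insert x C) = r C" using rank_cases[of x C] by auto
  have "\<phi> ` {f, g} = {(1, 0), (1, 1)}" using f g by auto
  then have "r ({f, g} \<union> C) = card {f, g} + r C" using ind[rule_format, of "{f, g}"] f g D1_b by auto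
  then have rfg: "r (insert f (insert g C)) = r C + 2" using dist by simp
  have "{x, f, g} \<subseteq> E - C" using x f g C by blast
  then show ?thesis using C(1) dist rx rfg by blast
qed

lemma SP2:
  assumes "has_minor_iso M (dsum [U 0 2, U 1 1])"
  shows "\<exists>C x y f. C \<subseteq> E \<and> {x, y, f} \<subseteq> E - C \<and> distinct [x, y, f] \<and>
     r (insert x C) = r C \<and> r (insert y C) = r C \<and> r (insert f C) = r C + 1"
proof -
  from get_minor[OF assms] obtain C E' \<phi> where H: "C \<subseteq> E \<and> E' \<subseteq> E - C \<and> bij_betw \<phi> E' (ground (dsum [U 0 2, U 1 1])) \<and>
     (\<forall>I \<subseteq> E'. (I \<subseteq> E' \<and> r (I \<union> C) = card I + r C) \<longleftrightarrow> indep (dsum [U 0 2, U 1 1]) (\<phi> ` I))"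
    by (elim exE) (rule that)
  then have C: "C \<subseteq> E" "E' \<subseteq> E - C" and bij: "bij_betw \<phi> E' (ground (dsum [U 0 2, U 1 1]))"
    and ind: "\<forall>I \<subseteq> E'. (I \<subseteq> E' \<and> r (I \<union> C) = card I + r C) \<longleftrightarrow> indep (dsum [U 0 2, U 1 1]) (\<phi> ` I)"
    by simp_all
  define x where "x = inv_into E' \<phi> (0, 0)"
  define y where "y = inv_into E' \<phi> (0, 1)"
  define f where "f = inv_into E' \<phi> (1, 0)"
  have x: "x \<in> E'" "\<phi> x = (0, 0)" using inv_pt[OF bij] D2_g x_def by auto
  have y: "y \<in> E'" "\<phi> y = (0, 1)" using inv_pt[OF bij] D2_g y_def by auto
  have f: "f \<in> E'" "\<phi> f = (1, 0)" using inv_pt[OF bij] D2_g f_def by auto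
  have dist: "distinct [x, y, f]" using x f y by auto
  have "\<not> (r ({x} \<union> C) = card {x} + r C)" using ind[rule_format, of "{x}"] x D2_a by auto
  then have rx: "r (insert x C) = r C" using rank_cases[of x C] by auto
  have "\<not> (r ({y} \<union> C) = card {y} + r C)" using ind[rule_format, of "{y}"] y D2_b by auto
  then have ry: "r (insert y C) = r C" using rank_cases[of y C] by auto
  have "r ({f} \<union> C) = card {f} + r C" using ind[rule_format, of "{f}"] f D2_c by auto
  then have rf: "r (insert f C) = r C + 1" by simp
  have "{x, y, f} \<subseteq> E - C" using x f y C by blast
  then show ?thesis using C(1) dist rx ry rf by blast
qed

end


context mat
begin

lemma circ_del_rank:
  assumes "circ K" "y \<in> K" "K \<subseteq> T"
  shows "r (T - {y}) = r T"
proof -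
  have "K - {y} \<subseteq> T - {y}" using assms by blast
  then have "r (insert y (T - {y})) = r (T - {y})" by (rule circ_span[OF assms(1) assms(2)])
  moreover have "insert y (T - {y}) = T" using assms by blast
  ultimately show ?thesis by simp
qed

lemma dep_rank: "X \<subseteq> E \<Longrightarrow> \<not> ind X \<Longrightarrow> r X < card X"
proof -
  assume a: "X \<subseteq> E" "\<not> ind X"
  have "finite X" using a(1) finE by (rule finite_subset)
  then have "r X \<le> card X" by (rule rank_le_card)
  moreover have "r X \<noteq> card X" using a ind_iff_rank by blast
  ultimately show ?thesis by simp
qed

lemma ind_insert_rank:
  assumes "ind Z" "y \<in> E" "y \<notin> Z" "r (insert y Z) = r Z + 1"
  shows "ind (insert y Z)"
proof -
  have fZ: "finite Z" using assms(1) ind_fin by blast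
  have "card (insert y Z) = card Z + 1" using fZ assms(3) by simp
  moreover have "r Z = card Z" using assms(1) rank_ind by blast
  moreover have "insert y Z \<subseteq> E" using assms(1,2) ind_sub by blast
  ultimately show ?thesis using ind_iff_rank assms(4) by simp
qed

lemma minor_rank_ind:
  assumes "ind Z" "I \<subseteq> E" "I \<inter> Z = {}"
  shows "r (I \<union> Z) = card I + r Z \<longleftrightarrow> ind (I \<union> Z)"
proof -
  have fI: "finite I" using assms(2) finE by (rule finite_subset)
  have fZ: "finite Z" using assms(1) ind_fin by blast
  have "card (I \<union> Z) = card I + card Z" using fI fZ assms(3) by (simp add: card_Un_disjoint)
  moreover have "r Z = card Z" using assms(1) rank_ind by blast
  moreover have "I \<union> Z \<subseteq> E" using assms(1,2) ind_sub by blast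
  ultimately show ?thesis using ind_iff_rank by simp
qed

lemma three_elems:
  assumes "card D \<ge> 3"
  shows "\<exists>a b c. a \<in> D \<and> b \<in> D \<and> c \<in> D \<and> distinct [a, b, c]"
proof -
  have fD: "finite D" using assms card.infinite by fastforce
  have "D \<noteq> {}" using assms by auto
  then obtain a where a: "a \<in> D" by blast
  have c2: "card (D - {a}) \<ge> 2" using assms a fD by (simp add: card_Diff_singleton)
  have "D - {a} \<noteq> {}"
  proof
    assume h: "D - {a} = {}"
    have "card (D - {a}) = 0" by (simp only: h card.empty)
    then show False using c2 by linarith
  qed
  then obtain b where b: "b \<in> D - {a}" by blast
  have c1: "card (D - {a} - {b}) \<ge> 1" using c2 b fD by (simp add: card_Diff_singleton)
  have "D - {a} - {b} \<noteq> {}"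
  proof
    assume h: "D - {a} - {b} = {}"
    have "card (D - {a} - {b}) = 0" by (simp only: h card.empty)
    then show False using c1 by linarith
  qed
  then obtain c where c: "c \<in> D - {a} - {b}" by blast
  show ?thesis using a b c by auto
qed

lemma loop_lemma:
  assumes noF1: "\<not> has_minor_iso M (dsum [U 0 1, U 2 3])"
    and Z: "ind Z" and x: "x \<in> E" "x \<notin> Z" "r (insert x Z) = r Z"
    and D: "D \<subseteq> E" "x \<notin> D" "D \<inter> Z = {}" "\<not> ind (Z \<union> D)" "\<And>S. S \<subset> D \<Longrightarrow> ind (Z \<union> S)"
  shows "card D \<le> 2"
proof (rule ccontr)
  assume "\<not> card D \<le> 2"
  then have "card D \<ge> 3" by simp
  then obtain a b c where abc: "a \<in> D" "b \<in> D" "c \<in> D" "distinct [a, b, c]"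
    using three_elems by blast
  define Z' where "Z' = Z \<union> (D - {a, b, c})"
  have "D - {a, b, c} \<subset> D" using abc by blast
  then have Z'ind: "ind Z'" unfolding Z'_def by (rule D(5))
  have Z'E: "Z' \<subseteq> E" using Z'ind ind_sub by blast
  have el: "{x, a, b, c} \<subseteq> E" using x abc D by blast
  have dist: "distinct [x, a, b, c]" using abc D(2) x by auto
  have nZ: "{x, a, b, c} \<inter> Z' = {}" unfolding Z'_def using x D(2,3) abc by blast
  show False
  proof (rule F1_rank[OF noF1 Z'E el dist nZ])
    fix I assume I: "I \<subseteq> {x, a, b, c}"
    have IE: "I \<subseteq> E" using I el by blast
    have IZ: "I \<inter> Z' = {}" using I nZ by blast
    have "r (I \<union> Z') = card I + r Z' \<longleftrightarrow> ind (I \<union> Z')" by (rule minor_rank_ind[OF Z'ind IE IZ])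
    also have "\<dots> \<longleftrightarrow> x \<notin> I \<and> \<not> {a, b, c} \<subseteq> I"
    proof
      assume ind: "ind (I \<union> Z')"
      show "x \<notin> I \<and> \<not> {a, b, c} \<subseteq> I"
      proof (intro conjI notI)
        assume "x \<in> I"
        then have "insert x Z \<subseteq> I \<union> Z'" unfolding Z'_def by blast
        then have "ind (insert x Z)" using ind ind_mono by blast
        then have "r (insert x Z) = r Z + 1" using rank_ind Z x ind_fin by simp
        then show False using x by simp
      next
        assume "{a, b, c} \<subseteq> I"
        then have "Z \<union> D \<subseteq> I \<union> Z'" unfolding Z'_def by blast
        then show False using ind ind_mono D(4) by blast
      qed
    next
      assume h: "x \<notin> I \<and> \<not> {a, b, c} \<subseteq> I"
      then obtain d where d: "d \<in> {a, b, c}" "d \<notin> I" by blast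
      have "D - {d} \<subset> D" using d abc by blast
      then have "ind (Z \<union> (D - {d}))" by (rule D(5))
      moreover have "I \<union> Z' \<subseteq> Z \<union> (D - {d})" unfolding Z'_def using I h d abc by blast
      ultimately show "ind (I \<union> Z')" using ind_mono by blast
    qed
    finally show "r (I \<union> Z') = card I + r Z' \<longleftrightarrow> x \<notin> I \<and> \<not> {a, b, c} \<subseteq> I" .
  qed
qed


lemma coloop_notin:
  assumes "W \<subseteq> E" "z \<in> W" "r (W - {z}) < r W" "circ K" "K \<subseteq> W"
  shows "z \<notin> K"
  using circ_del_rank[OF assms(4) _ assms(5), of z] assms(3) by auto

lemma coloop_ins:
  assumes "W \<subseteq> E" "z \<in> W" "r (W - {z}) < r W" "S \<subseteq> W - {z}"
  shows "r (insert z S) = r S + 1"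
proof (rule ccontr)
  assume "r (insert z S) \<noteq> r S + 1"
  then have "r (insert z S) = r S" using rank_cases by blast
  then have "r (insert z (W - {z})) = r (W - {z})" using assms(4) by (rule cl_mono)
  moreover have "insert z (W - {z}) = W" using assms(2) by blast
  ultimately show False using assms(3) by simp
qed

lemma coloop_lemma:
  assumes noF2: "\<not> has_minor_iso M (dsum [U 1 1, U 1 3])"
    and W: "W \<subseteq> E" "z \<in> W" "r (W - {z}) < r W"
    and K: "circ K1" "circ K2" "K1 \<subseteq> W" "K2 \<subseteq> W" "K1 \<noteq> K2"
  shows "K1 \<inter> K2 = {}"
  using K
proof (induction "card (K1 \<union> K2)" arbitrary: K1 K2 rule: less_induct)
  case less
  note IH = less(1)
  note L = less(2-6)
  show ?case
  proof (rule ccontr)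
    assume "K1 \<inter> K2 \<noteq> {}"
    then obtain e where e: "e \<in> K1" "e \<in> K2" by blast
    have "\<not> K1 \<subseteq> K2" using circ_incomp L(1,2,5) by blast
    then obtain a where a: "a \<in> K1" "a \<notin> K2" by blast
    have "\<not> K2 \<subseteq> K1" using circ_incomp[OF L(2) L(1)] L(5) by blast
    then obtain b where b: "b \<in> K2" "b \<notin> K1" by blast
    define X where "X = K1 \<union> K2"
    define Z where "Z = X - {a, b, e}"
    have zK1: "z \<notin> K1" using coloop_notin[OF W L(1) L(3)] .
    have zK2: "z \<notin> K2" using coloop_notin[OF W L(2) L(4)] .
    have XE: "X \<subseteq> E" unfolding X_def using L(3,4) W(1) by blast
    have ZE: "Z \<subseteq> E" using XE unfolding Z_def by blast
    have ab: "a \<noteq> b" "a \<noteq> e" "b \<noteq> e" using a b e by auto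
    have rXb: "r (X - {b}) = r X" by (rule circ_del_rank[OF L(2) b(1)]) (simp add: X_def)
    have rXa: "r (X - {a}) = r X" by (rule circ_del_rank[OF L(1) a(1)]) (simp add: X_def)
    have ra: "r (insert a Z) = r X"
    proof -
      have "K1 \<subseteq> X - {b}" unfolding X_def using b by blast
      then have "r (X - {b} - {e}) = r (X - {b})" by (rule circ_del_rank[OF L(1) e(1)])
      moreover have "insert a Z = X - {b} - {e}" unfolding Z_def X_def using a ab by blast
      ultimately show ?thesis using rXb by simp
    qed
    have rb: "r (insert b Z) = r X"
    proof -
      have "K2 \<subseteq> X - {a}" unfolding X_def using a by blast
      then have "r (X - {a} - {e}) = r (X - {a})" by (rule circ_del_rank[OF L(2) e(2)])
      moreover have "insert b Z = X - {a} - {e}" unfolding Z_def X_def using b ab by blast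
      ultimately show ?thesis using rXa by simp
    qed
    have re: "r (insert e Z) = r X"
    proof -
      have "K2 \<subseteq> X - {a}" unfolding X_def using a by blast
      then have "r (X - {a} - {b}) = r (X - {a})" by (rule circ_del_rank[OF L(2) b(1)])
      moreover have "insert e Z = X - {a} - {b}" unfolding Z_def X_def using e ab by blast
      ultimately show ?thesis using rXa by simp
    qed
    have rZX: "r Z \<le> r X" by (rule rank_mono) (simp add: Z_def)
    show False
    proof (cases "r Z = r X")
      case True
      then have "r (insert a Z) = r Z" using ra by simp
      moreover have "a \<in> E" "a \<notin> Z" using a XE unfolding Z_def X_def by auto
      ultimately obtain K3 where K3: "circ K3" "a \<in> K3" "K3 \<subseteq> insert a Z"
        using span_circ[OF ZE] by blast
      have eK3: "e \<notin> K3" using K3 ab unfolding Z_def by blast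
      have K31: "K3 \<noteq> K1" using eK3 e by blast
      have aZX: "insert a Z \<subseteq> X - {b}" unfolding Z_def X_def using a ab by blast
      have XW: "X \<subseteq> W" unfolding X_def using L(3,4) by blast
      have K3W: "K3 \<subseteq> W" using K3(3) aZX XW by blast
      have sub: "K3 \<union> K1 \<subset> K1 \<union> K2"
      proof -
        have "K1 \<subseteq> X - {b}" unfolding X_def using b by blast
        then have "K3 \<union> K1 \<subseteq> X - {b}" using K3(3) aZX by blast
        then show ?thesis using b unfolding X_def by blast
      qed
      have "finite X" using XE finE by (rule finite_subset)
      then have "finite (K1 \<union> K2)" unfolding X_def .
      then have "card (K3 \<union> K1) < card (K1 \<union> K2)" by (rule psubset_card_mono[OF _ sub])
      then have "K3 \<inter> K1 = {}" using IH[OF _ K3(1) L(1) K3W L(3) K31] by blast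
      then show False using K3 a by blast
    next
      case False
      then have lt: "r Z < r X" using rZX by simp
      have rX1: "r X = r Z + 1" using ra rank_insert_le[of a Z] lt by linarith
      have el: "{z, a, b, e} \<subseteq> E" using W XE a b e unfolding X_def by blast
      have dist: "distinct [z, a, b, e]" using ab zK1 zK2 a b e by auto
      have nZ: "{z, a, b, e} \<inter> Z = {}" using zK1 zK2 unfolding Z_def X_def by blast
      show False
      proof (rule F2_data[OF noF2 ZE el dist nZ])
        fix y assume "y \<in> {a, b, e}"
        then show "r (insert y Z) = r Z + 1" using ra rb re rX1 by auto
      next
        have "Z \<union> {a, b, e} = X" unfolding Z_def X_def using a b e by blast
        then show "r (Z \<union> {a, b, e}) = r Z + 1" using rX1 by simp
      next
        fix S assume "S \<subseteq> {a, b, e}"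
        then have "S \<union> Z \<subseteq> W - {z}" using L(3,4) zK1 zK2 a b e unfolding Z_def X_def by blast
        then show "r (insert z (S \<union> Z)) = r (S \<union> Z) + 1" by (rule coloop_ins[OF W])
      qed
    qed
  qed
qed

lemma rel_circ_exists:
  assumes Z: "ind Z" and K: "circ K" and y: "y \<in> K" "y \<notin> Z"
  shows "\<exists>D. D \<subseteq> K - Z \<and> y \<in> D \<and> \<not> ind (Z \<union> D) \<and> (\<forall>S. S \<subset> D \<longrightarrow> ind (Z \<union> S))"
proof -
  define T where "T = K - Z - {y}"
  let ?P = "\<lambda>S. S \<subseteq> T \<and> ind (Z \<union> S) \<and> r (insert y (Z \<union> S)) = r (Z \<union> S)"
  obtain B where B: "Z \<subseteq> B" "B \<subseteq> Z \<union> T" "ind B" "card B = r (Z \<union> T)"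
    using extend[of Z "Z \<union> T"] Z by blast
  have "K - {y} \<subseteq> Z \<union> T" unfolding T_def by blast
  then have sp: "r (insert y (Z \<union> T)) = r (Z \<union> T)" by (rule circ_span[OF K y(1)])
  have rB: "r B = r (Z \<union> T)" using B rank_ind by simp
  have "r (insert y B) \<le> r (insert y (Z \<union> T))" using B by (intro rank_mono) auto
  moreover have "r B \<le> r (insert y B)" by (rule rank_mono) auto
  ultimately have "r (insert y B) = r B" using sp rB by linarith
  moreover have "Z \<union> (B - Z) = B" using B by blast
  ultimately have P0: "?P (B - Z)" using B by auto
  obtain S1 where S1: "?P S1" and S1min: "\<And>S. ?P S \<Longrightarrow> card S1 \<le> card S"
    using ex_has_least_nat[of ?P "B - Z" card, OF P0] by blast
  define D where "D = insert y S1"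
  have yT: "y \<notin> T" unfolding T_def by blast
  have KE: "K \<subseteq> E" using K circ_sub by blast
  have TE: "T \<subseteq> E" using KE unfolding T_def by blast
  have fT: "finite T" using TE finE by (rule finite_subset)
  have yE: "y \<in> E" using KE y by blast
  have "D \<subseteq> K - Z" using S1 y unfolding D_def T_def by blast
  moreover have "\<not> ind (Z \<union> D)"
  proof
    assume "ind (Z \<union> D)"
    moreover have "Z \<union> D = insert y (Z \<union> S1)" unfolding D_def by blast
    ultimately have "ind (insert y (Z \<union> S1))" by simp
    then have e1: "r (insert y (Z \<union> S1)) = card (insert y (Z \<union> S1))" by (rule rank_ind)
    have "finite (Z \<union> S1)" using S1 ind_fin by blast
    moreover have "y \<notin> Z \<union> S1" using y S1 yT by blast
    ultimately have e2: "card (insert y (Z \<union> S1)) = card (Z \<union> S1) + 1" by simp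
    have e3: "r (Z \<union> S1) = card (Z \<union> S1)" using S1 rank_ind by blast
    have e4: "r (insert y (Z \<union> S1)) = r (Z \<union> S1)" using S1 by blast
    show False using e1 e2 e3 e4 by linarith
  qed
  moreover have "\<forall>S. S \<subset> D \<longrightarrow> ind (Z \<union> S)"
  proof (intro allI impI)
    fix S assume SD: "S \<subset> D"
    show "ind (Z \<union> S)"
    proof (cases "y \<in> S")
      case False
      then have "Z \<union> S \<subseteq> Z \<union> S1" using SD unfolding D_def by blast
      then show ?thesis using S1 ind_mono by blast
    next
      case True
      define S' where "S' = S - {y}"
      have S'S1: "S' \<subset> S1" using SD True yT S1 unfolding S'_def D_def by blast
      have "S1 \<subseteq> T" using S1 by blast
      then have fS1: "finite S1" using fT by (rule finite_subset)
      have cS': "card S' < card S1" using fS1 S'S1 psubset_card_mono by blast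
      have iS': "ind (Z \<union> S')" using S1 S'S1 ind_mono by blast
      have ZS: "Z \<union> S = insert y (Z \<union> S')" unfolding S'_def using True by blast
      show ?thesis
      proof (rule ccontr)
        assume "\<not> ind (Z \<union> S)"
        then have "r (insert y (Z \<union> S')) \<noteq> r (Z \<union> S') + 1"
          using ind_insert_rank[OF iS' yE] yT y S'S1 S1 ZS by auto
        then have "r (insert y (Z \<union> S')) = r (Z \<union> S')" using rank_cases by blast
        then have "?P S'" using iS' S'S1 S1 by auto
        then have "card S1 \<le> card S'" by (rule S1min)
        then show False using cS' by linarith
      qed
    qed
  qed
  moreover have "y \<in> D" unfolding D_def by blast
  ultimately show ?thesis by blast
qed

lemma rel_circ_lift:
  assumes "ind Z" "D \<inter> Z = {}" "D \<subseteq> E" "\<not> ind (Z \<union> D)" "\<And>S. S \<subset> D \<Longrightarrow> ind (Z \<union> S)"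
  shows "\<exists>K. circ K \<and> D \<subseteq> K \<and> K \<subseteq> Z \<union> D"
proof -
  have "Z \<union> D \<subseteq> E" using assms ind_sub by blast
  then obtain K where K: "K \<subseteq> Z \<union> D" "circ K" using dep_circ assms(4) by blast
  have "D \<subseteq> K"
  proof
    fix d assume d: "d \<in> D"
    show "d \<in> K"
    proof (rule ccontr)
      assume "d \<notin> K"
      then have "K \<subseteq> Z \<union> (D - {d})" using K by blast
      moreover have "D - {d} \<subset> D" using d by blast
      then have "ind (Z \<union> (D - {d}))" by (rule assms(5))
      ultimately have "ind K" using ind_mono by blast
      then show False using K circ_dep by blast
    qed
  qed
  then show ?thesis using K by blast
qed

end


lemma two_elems:
  assumes "finite D" "card D \<le> 2" "a \<in> D" "b \<in> D" "a \<noteq> b"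
  shows "D = {a, b}"
proof -
  have s: "{a, b} \<subseteq> D" using assms by blast
  have "card {a, b} = 2" using assms(5) by simp
  then show ?thesis using card_seteq[OF assms(1) s] assms(2) by simp
qed

context mat
begin

lemma conn_circ:
  assumes "connected M" "x \<in> E" "y \<in> E" "x \<noteq> y"
  shows "\<exists>K. circ K \<and> x \<in> K \<and> y \<in> K"
  using assms unfolding connected_def by blast

lemma notin_rank: "r (insert s X) = r X + 1 \<Longrightarrow> s \<notin> X"
proof
  assume h: "r (insert s X) = r X + 1" and "s \<in> X"
  then have "insert s X = X" by blast
  then show False using h by simp
qed

lemma span_exists:
  assumes "W \<subseteq> E" "r S < r W"
  shows "\<exists>y\<in>W. r (insert y S) = r S + 1"
proof (rule ccontr)
  assume "\<not> (\<exists>y\<in>W. r (insert y S) = r S + 1)"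
  then have "\<forall>y\<in>W. r (insert y S) = r S" using rank_cases by blast
  moreover have "finite W" using assms(1) finE by (rule finite_subset)
  ultimately have "r (S \<union> W) = r S" using span_union by blast
  moreover have "r W \<le> r (S \<union> W)" by (rule rank_mono) auto
  ultimately show False using assms by simp
qed

lemma ind2:
  assumes "ind C" "u \<in> E" "v \<in> E" "u \<notin> C" "v \<notin> C" "u \<noteq> v"
    "r (insert v C) = r C + 1" "r (insert u (insert v C)) = r C + 2"
  shows "ind (C \<union> {u, v})"
proof -
  have "ind (insert v C)" by (rule ind_insert_rank[OF assms(1) assms(3) assms(5) assms(7)])
  moreover have "r (insert u (insert v C)) = r (insert v C) + 1" using assms(7,8) by simp
  ultimately have "ind (insert u (insert v C))" using ind_insert_rank assms(2,4,6) by blast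
  moreover have "C \<union> {u, v} = insert u (insert v C)" by blast
  ultimately show ?thesis by simp
qed

lemma P_contra:
  assumes noF1: "\<not> has_minor_iso M (dsum [U 0 1, U 2 3])"
    and noF2: "\<not> has_minor_iso M (dsum [U 1 1, U 1 3])"
    and conn: "connected M"
    and C: "ind C" and x: "x \<in> E" "x \<notin> C" "r (insert x C) = r C" and rE: "r E = card C + 2"
  shows False
proof -
  have rC: "r C = card C" using C rank_ind by blast
  have CE: "C \<subseteq> E" using C ind_sub by blast
  have fC: "finite C" using C ind_fin by blast
  obtain p where p: "p \<in> E" "r (insert p C) = r C + 1" using span_exists[of E C] rE rC by auto
  define T where "T = insert p C"
  have rT: "r T = card C + 1" using p rC unfolding T_def by simp
  have CT: "C \<subseteq> T" unfolding T_def by blast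
  have xT: "r (insert x T) = r T" using x(3) CT by (rule cl_mono)
  obtain q where q: "q \<in> E" "r (insert q T) = r T + 1" using span_exists[of E T] rT rE by auto
  have qx: "q \<noteq> x" using q xT by auto
  obtain Kq where Kq: "circ Kq" "q \<in> Kq" using conn_circ[OF conn q(1) x(1) qx] by blast
  have rEq: "r (E - {q}) = r E" using circ_del_rank[OF Kq(1) Kq(2)] circ_sub[OF Kq(1)] by blast
  have "r T < r (E - {q})" using rEq rT rE by simp
  then obtain q2 where q2: "q2 \<in> E - {q}" "r (insert q2 T) = r T + 1"
    using span_exists[of "E - {q}" T] by blast
  have sC: "\<And>s. r (insert s T) = r T + 1 \<Longrightarrow> r (insert s C) = r C + 1"
  proof -
    fix s assume s: "r (insert s T) = r T + 1"
    have "insert s T = insert p (insert s C)" unfolding T_def by blast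
    then have "r (insert s T) \<le> r (insert s C) + 1" using rank_insert_le[of p "insert s C"] by simp
    then show "r (insert s C) = r C + 1" using s rT rC rank_cases[of s C] by linarith
  qed
  have sTC: "\<And>s. r (insert s T) = r T + 1 \<Longrightarrow> s \<notin> T" by (rule notin_rank)
  have pC: "p \<notin> C" using p(2) by (rule notin_rank)
  have rqC: "r (insert q C) = r C + 1" using sC q(2) by blast
  have par: "\<And>y. y \<in> E \<Longrightarrow> r (insert y T) = r T + 1 \<Longrightarrow> r (insert y (insert q C)) = r C + 1"
  proof -
    fix y assume y: "y \<in> E" "r (insert y T) = r T + 1"
    show "r (insert y (insert q C)) = r C + 1"
    proof (rule ccontr)
      assume ne: "r (insert y (insert q C)) \<noteq> r C + 1"
      have ryC: "r (insert y C) = r C + 1" using sC y(2) by blast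
      have "r (insert q C) \<le> r (insert y (insert q C))" by (rule rank_mono) auto
      then have ryq: "r (insert y (insert q C)) = r C + 2"
        using ne rqC rank_insert_le[of y "insert q C"] by linarith
      have yq: "y \<noteq> q" using ne rqC by auto
      have qT: "q \<notin> T" using sTC q(2) by blast
      have yT: "y \<notin> T" using sTC y(2) by blast
      have qC: "q \<notin> C" "q \<noteq> p" using qT unfolding T_def by auto
      have yC: "y \<notin> C" "y \<noteq> p" using yT unfolding T_def by auto
      have rpq: "r (insert p (insert q C)) = r C + 2"
      proof -
        have "insert p (insert q C) = insert q T" unfolding T_def by blast
        then show ?thesis using q(2) rT rC by simp
      qed
      have rpy: "r (insert p (insert y C)) = r C + 2"
      proof -
        have "insert p (insert y C) = insert y T" unfolding T_def by blast
        then show ?thesis using y(2) rT rC by simp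
      qed
      have i1: "ind (C \<union> {p, q})" by (rule ind2[OF C p(1) q(1) pC qC(1) qC(2)[symmetric] rqC rpq])
      have i2: "ind (C \<union> {p, y})" by (rule ind2[OF C p(1) y(1) pC yC(1) yC(2)[symmetric] ryC rpy])
      have i3: "ind (C \<union> {y, q})" by (rule ind2[OF C y(1) q(1) yC(1) qC(1) yq rqC ryq])
      define D where "D = {p, q, y}"
      have DE: "D \<subseteq> E" unfolding D_def using p q y by blast
      have xD: "x \<notin> D" unfolding D_def using x(3) p(2) rqC ryC by auto
      have DC: "D \<inter> C = {}" unfolding D_def using pC qC yC by blast
      have dep: "\<not> ind (C \<union> D)"
      proof
        assume "ind (C \<union> D)"
        then have "r (C \<union> D) = card (C \<union> D)" by (rule rank_ind)
        moreover have "card (C \<union> D) = card C + 3"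
        proof -
          have "card D = 3" unfolding D_def using qC(2) yC(2) yq by auto
          moreover have "finite D" unfolding D_def by simp
          moreover have "C \<inter> D = {}" using DC by blast
          ultimately show ?thesis using fC by (simp add: card_Un_disjoint)
        qed
        moreover have "r (C \<union> D) \<le> r E" using DE CE by (intro rank_mono) auto
        ultimately show False using rE by simp
      qed
      have mn: "\<And>S. S \<subset> D \<Longrightarrow> ind (C \<union> S)"
      proof -
        fix S assume "S \<subset> D"
        then obtain w where w: "w \<in> D" "w \<notin> S" unfolding D_def by blast
        then have "w = p \<or> w = q \<or> w = y" unfolding D_def by blast
        moreover have "S \<subseteq> D - {w}" using \<open>S \<subset> D\<close> w by blast
        ultimately have "C \<union> S \<subseteq> C \<union> {y, q} \<or> C \<union> S \<subseteq> C \<union> {p, y} \<or> C \<union> S \<subseteq> C \<union> {p, q}"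
          unfolding D_def by blast
        then show "ind (C \<union> S)" using i1 i2 i3 ind_mono by blast
      qed
      have "card D \<le> 2" by (rule loop_lemma[OF noF1 C x(1) x(2) x(3) DE xD DC dep mn])
      moreover have "card D = 3" unfolding D_def using qC(2) yC(2) yq by auto
      ultimately show False by simp
    qed
  qed
  have q2q: "q2 \<noteq> q" "q2 \<in> E" using q2 by auto
  have rest: "\<And>y. y \<in> E \<Longrightarrow> y \<noteq> q \<Longrightarrow> y \<noteq> q2 \<Longrightarrow> r (insert y T) = r T"
  proof (rule ccontr)
    fix y assume y: "y \<in> E" "y \<noteq> q" "y \<noteq> q2" and ne: "r (insert y T) \<noteq> r T"
    then have yT1: "r (insert y T) = r T + 1" using rank_cases by blast
    have Z: "C \<subseteq> E" by (rule CE)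
    have qT: "q \<notin> T" using sTC q(2) by blast
    have q2T: "q2 \<notin> T" using sTC q2(2) by blast
    have yT: "y \<notin> T" using sTC yT1 by blast
    have el: "{p, q, q2, y} \<subseteq> E" using p q q2 y by blast
    have dist: "distinct [p, q, q2, y]" using qT q2T yT y q2q unfolding T_def by auto
    have nZ: "{p, q, q2, y} \<inter> C = {}" using pC qT q2T yT unfolding T_def by blast
    have rq2C: "r (insert q2 C) = r C + 1" using sC q2(2) by blast
    have ryC: "r (insert y C) = r C + 1" using sC yT1 by blast
    have pq2: "r (insert q2 (insert q C)) = r C + 1" using par q2q(2) q2(2) by blast
    have pyq: "r (insert y (insert q C)) = r C + 1" using par y(1) yT1 by blast
    have rall: "r (C \<union> {q, q2, y}) = r C + 1"
    proof -
      have "r (insert q2 (insert q C)) = r (insert q C)" using pq2 rqC by simp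
      moreover have "r (insert y (insert q C)) = r (insert q C)" using pyq rqC by simp
      ultimately have "\<forall>t\<in>{q2, y}. r (insert t (insert q C)) = r (insert q C)" by blast
      then have "r (insert q C \<union> {q2, y}) = r (insert q C)" by (intro span_union) auto
      moreover have "C \<union> {q, q2, y} = insert q C \<union> {q2, y}" by blast
      ultimately show ?thesis using rqC by simp
    qed
    have T2: "\<And>s. s \<in> {q, q2, y} \<Longrightarrow> r (insert p (insert s C)) = r C + 2"
    proof -
      fix s assume s: "s \<in> {q, q2, y}"
      have "insert p (insert s C) = insert s T" unfolding T_def by blast
      moreover have "r (insert s T) = r T + 1" using s q(2) q2(2) yT1 by blast
      ultimately show "r (insert p (insert s C)) = r C + 2" using rT rC by simp
    qed
    show False
    proof (rule F2_data[OF noF2 Z el dist nZ])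
      fix s assume "s \<in> {q, q2, y}"
      then show "r (insert s C) = r C + 1" using rqC rq2C ryC by blast
    next
      show "r (C \<union> {q, q2, y}) = r C + 1" by (rule rall)
    next
      fix S assume S: "S \<subseteq> {q, q2, y}"
      show "r (insert p (S \<union> C)) = r (S \<union> C) + 1"
      proof (cases "S = {}")
        case True then show ?thesis using p(2) by simp
      next
        case False
        then obtain s where s: "s \<in> S" by blast
        have "r (insert s C) \<le> r (S \<union> C)" using s by (intro rank_mono) auto
        moreover have "r (S \<union> C) \<le> r (C \<union> {q, q2, y})" using S by (intro rank_mono) auto
        moreover have "r (insert s C) = r C + 1" using s S rqC rq2C ryC by blast
        ultimately have rSC: "r (S \<union> C) = r C + 1" using rall by linarith
        have "r (insert p (insert s C)) \<le> r (insert p (S \<union> C))" using s by (intro rank_mono) auto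
        moreover have "r (insert p (insert s C)) = r C + 2" using T2 s S by blast
        moreover have "r (insert p (S \<union> C)) \<le> r (S \<union> C) + 1" by (rule rank_insert_le)
        ultimately show ?thesis using rSC by linarith
      qed
    qed
  qed
  define W where "W = E - {q}"
  have WE: "W \<subseteq> E" unfolding W_def by blast
  have q2W: "q2 \<in> W" unfolding W_def using q2 by blast
  have Wc: "r (W - {q2}) < r W"
  proof -
    have "\<forall>y\<in>W - {q2}. r (insert y T) = r T" using rest unfolding W_def by blast
    moreover have "finite (W - {q2})" using WE finE by (meson finite_Diff finite_subset)
    ultimately have "r (T \<union> (W - {q2})) = r T" using span_union by blast
    moreover have "r (W - {q2}) \<le> r (T \<union> (W - {q2}))" by (rule rank_mono) auto
    moreover have "r W = r E" unfolding W_def by (rule rEq)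
    ultimately show ?thesis using rT rE by simp
  qed
  have disj: "\<And>K1 K2. circ K1 \<Longrightarrow> circ K2 \<Longrightarrow> q \<notin> K1 \<Longrightarrow> q \<notin> K2 \<Longrightarrow> K1 \<noteq> K2 \<Longrightarrow> K1 \<inter> K2 = {}"
  proof -
    fix K1 K2 assume a: "circ K1" "circ K2" "q \<notin> K1" "q \<notin> K2" "K1 \<noteq> K2"
    have "K1 \<subseteq> W" "K2 \<subseteq> W" unfolding W_def using a circ_sub by blast+
    then show "K1 \<inter> K2 = {}" using coloop_lemma[OF noF2 WE q2W Wc a(1) a(2)] a(5) by blast
  qed
  obtain Kx where Kx: "circ Kx" "x \<in> Kx" "Kx \<subseteq> insert x C" using span_circ[OF CE x(1) x(2) x(3)] by blast
  define Z where "Z = Kx - {x}"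
  have Zi: "ind Z" unfolding Z_def by (rule circ_del[OF Kx(1) Kx(2)])
  have ZC: "Z \<subseteq> C" unfolding Z_def using Kx(3) by blast
  have xZ: "x \<notin> Z" unfolding Z_def by blast
  have KxZ: "Kx = insert x Z" unfolding Z_def using Kx(2) by blast
  have rZx: "r (insert x Z) = r Z" by (rule circ_span[OF Kx(1) Kx(2)]) (simp add: Z_def)
  have qC: "q \<notin> C" using sTC q(2) unfolding T_def by blast
  have qKx: "q \<notin> Kx" using Kx(3) qC qx by blast
  have fZ: "finite Z" using Zi ind_fin by blast
  have rZ: "r Z = card Z" using Zi rank_ind by blast
  have "card Z \<le> card C" using ZC fC by (rule card_mono[rotated])
  then have "r (insert q Z) < r E" using rank_insert_le[of q Z] rZ rE by linarith
  then obtain y where y: "y \<in> E" "r (insert y (insert q Z)) = r (insert q Z) + 1"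
    using span_exists[of E "insert q Z"] by blast
  have qZ: "r (insert q Z) = r Z + 1"
  proof (rule ccontr)
    assume "r (insert q Z) \<noteq> r Z + 1"
    then have "r (insert q Z) = r Z" using rank_cases by blast
    then have "r (insert q C) = r C" using ZC by (rule cl_mono)
    then show False using rqC by simp
  qed
  have yZ: "r (insert y Z) = r Z + 1"
  proof (rule ccontr)
    assume "r (insert y Z) \<noteq> r Z + 1"
    then have "r (insert y Z) = r Z" using rank_cases by blast
    then have "r (insert y (insert q Z)) = r (insert q Z)" by (rule cl_mono) auto
    then show False using y by simp
  qed
  have yx: "y \<noteq> x" using yZ rZx by auto
  have yZn: "y \<notin> Z" using yZ by (rule notin_rank)
  have yKx: "y \<notin> Kx" using KxZ yx yZn by blast
  have yq: "y \<noteq> q" using y by auto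
  obtain K where K: "circ K" "x \<in> K" "y \<in> K" using conn_circ[OF conn x(1) y(1) yx[symmetric]] by blast
  obtain D where D: "D \<subseteq> K - Z" "y \<in> D" "\<not> ind (Z \<union> D)" "\<forall>S. S \<subset> D \<longrightarrow> ind (Z \<union> S)"
    using rel_circ_exists[OF Zi K(1) K(3) yZn] by blast
  have DE: "D \<subseteq> E" using D(1) circ_sub[OF K(1)] by blast
  have DZ: "D \<inter> Z = {}" using D(1) by blast
  have xD: "x \<notin> D"
  proof
    assume "x \<in> D"
    then have "{x} \<subset> D" using D(2) yx by blast
    then have "ind (Z \<union> {x})" using D(4) by blast
    moreover have "Z \<union> {x} = Kx" using KxZ by blast
    ultimately show False using Kx(1) circ_dep by simp
  qed
  have cD: "card D \<le> 2" by (rule loop_lemma[OF noF1 Zi x(1) xZ rZx DE xD DZ D(3)]) (use D(4) in blast)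
  have fD: "finite D" using DE finE by (rule finite_subset)
  have qD: "q \<notin> D"
  proof
    assume "q \<in> D"
    then have "D = {y, q}" using two_elems[OF fD cD D(2) _ yq] by blast
    moreover have "ind (Z \<union> {y, q})"
    proof (rule ind2[OF Zi y(1) q(1) yZn _ yq])
      show "q \<notin> Z" using ZC qC by blast
      show "r (insert q Z) = r Z + 1" by (rule qZ)
      show "r (insert y (insert q Z)) = r Z + 2" using y(2) qZ by simp
    qed
    ultimately show False using D(3) by simp
  qed
  obtain K' where K': "circ K'" "D \<subseteq> K'" "K' \<subseteq> Z \<union> D"
    using rel_circ_lift[OF Zi DZ DE D(3)] D(4) by blast
  have qK': "q \<notin> K'" using K'(3) qD ZC qC by blast
  have K'Kx: "K' \<noteq> Kx" using K'(2) D(2) yKx by blast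
  have "K' \<inter> Kx = {}" by (rule disj[OF K'(1) Kx(1) qK' qKx K'Kx])
  then have "K' \<subseteq> D" using K'(3) KxZ by blast
  then have "K' = D" using K'(2) by blast
  then have "K' \<subseteq> K" using D(1) by blast
  then have "K' = K" using circ_incomp[OF K'(1) K(1)] by blast
  then show False using K(2) xD \<open>K' = D\<close> by blast
qed


lemma Q_contra:
  assumes noF1: "\<not> has_minor_iso M (dsum [U 0 1, U 2 3])"
    and noF2: "\<not> has_minor_iso M (dsum [U 1 1, U 1 3])"
    and conn: "connected M"
    and C: "ind C" and xy: "x \<in> E" "y \<in> E" "x \<noteq> y" "x \<notin> C" "y \<notin> C"
      "r (insert x C) = r C" "r (insert y C) = r C"
    and rE: "r E = card C + 1"
  shows False
proof -
  have rC: "r C = card C" using C rank_ind by blast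
  have CE: "C \<subseteq> E" using C ind_sub by blast
  obtain f where f: "f \<in> E" "r (insert f C) = r C + 1" using span_exists[of E C] rE rC by auto
  define H where "H = {e \<in> E. r (insert e C) = r C}"
  have CH: "C \<subseteq> H" unfolding H_def using CE by (auto simp: insert_absorb)
  have fH: "f \<notin> H" unfolding H_def using f by simp
  have xH: "x \<in> H" "y \<in> H" unfolding H_def using xy by auto
  have HE: "H \<subseteq> E" unfolding H_def by blast
  have fHf: "finite H" using HE finE by (rule finite_subset)
  have rH: "r H = r C"
  proof -
    have "\<forall>t\<in>H. r (insert t C) = r C" unfolding H_def by blast
    then have "r (C \<union> H) = r C" using span_union fHf by blast
    moreover have "r H \<le> r (C \<union> H)" by (rule rank_mono) auto
    moreover have "r C \<le> r H" using CH by (rule rank_mono)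
    ultimately show ?thesis by linarith
  qed
  define W where "W = insert f H"
  have WE: "W \<subseteq> E" unfolding W_def using HE f by blast
  have fW: "f \<in> W" unfolding W_def by blast
  have Wc: "r (W - {f}) < r W"
  proof -
    have "W - {f} = H" unfolding W_def using fH by blast
    moreover have "r (insert f C) \<le> r W" unfolding W_def using CH by (intro rank_mono) auto
    ultimately show ?thesis using rH f by simp
  qed
  have disj: "\<And>K1 K2. circ K1 \<Longrightarrow> circ K2 \<Longrightarrow> K1 \<subseteq> H \<Longrightarrow> K2 \<subseteq> H \<Longrightarrow> K1 \<noteq> K2 \<Longrightarrow> K1 \<inter> K2 = {}"
  proof -
    fix K1 K2 assume a: "circ K1" "circ K2" "K1 \<subseteq> H" "K2 \<subseteq> H" "K1 \<noteq> K2"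
    have "K1 \<subseteq> W" "K2 \<subseteq> W" unfolding W_def using a by blast+
    then show "K1 \<inter> K2 = {}" using coloop_lemma[OF noF2 WE fW Wc a(1) a(2)] a(5) by blast
  qed
  obtain Kx where Kx: "circ Kx" "x \<in> Kx" "Kx \<subseteq> insert x C" using span_circ[OF CE xy(1) xy(4) xy(6)] by blast
  obtain Ky where Ky: "circ Ky" "y \<in> Ky" "Ky \<subseteq> insert y C" using span_circ[OF CE xy(2) xy(5) xy(7)] by blast
  have KxH: "Kx \<subseteq> H" using Kx(3) CH xH by blast
  have KyH: "Ky \<subseteq> H" using Ky(3) CH xH by blast
  have KxKy: "Kx \<noteq> Ky" using Kx(2) Ky(3) xy(3,4) by blast
  have dxy: "Kx \<inter> Ky = {}" by (rule disj[OF Kx(1) Ky(1) KxH KyH KxKy])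
  define Z where "Z = Kx - {x}"
  have Zi: "ind Z" unfolding Z_def by (rule circ_del[OF Kx(1) Kx(2)])
  have ZC: "Z \<subseteq> C" unfolding Z_def using Kx(3) by blast
  have xZ: "x \<notin> Z" unfolding Z_def by blast
  have KxZ: "Kx = insert x Z" unfolding Z_def using Kx(2) by blast
  have rZx: "r (insert x Z) = r Z" by (rule circ_span[OF Kx(1) Kx(2)]) (simp add: Z_def)
  have yZn: "y \<notin> Z" using ZC xy(5) by blast
  have ZE: "Z \<subseteq> E" using ZC CE by blast
  have fy: "f \<noteq> y" using fH xH by blast
  obtain K where K: "circ K" "y \<in> K" "f \<in> K" using conn_circ[OF conn xy(2) f(1) fy[symmetric]] by blast
  have yZ: "r (insert y Z) = r Z + 1"
  proof (rule ccontr)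
    assume "r (insert y Z) \<noteq> r Z + 1"
    then have "r (insert y Z) = r Z" using rank_cases by blast
    then obtain K2 where K2: "circ K2" "y \<in> K2" "K2 \<subseteq> insert y Z" using span_circ[OF ZE xy(2) yZn] by blast
    have K2H: "K2 \<subseteq> H" using K2(3) ZC CH xH by blast
    have "K2 = Ky" using disj[OF K2(1) Ky(1) K2H KyH] K2(2) Ky(2) by blast
    then have "Ky \<subseteq> {y}" using K2(3) dxy KxZ by blast
    then have "Ky = {y}" using Ky(2) by blast
    then have "{y} \<subseteq> K" using K(2) by blast
    then have "{y} = K" using circ_incomp[OF _ K(1)] Ky(1) \<open>Ky = {y}\<close> by blast
    then show False using K(3) fy by blast
  qed
  obtain D where D: "D \<subseteq> K - Z" "y \<in> D" "\<not> ind (Z \<union> D)" "\<forall>S. S \<subset> D \<longrightarrow> ind (Z \<union> S)"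
    using rel_circ_exists[OF Zi K(1) K(2) yZn] by blast
  have DE: "D \<subseteq> E" using D(1) circ_sub[OF K(1)] by blast
  have DZ: "D \<inter> Z = {}" using D(1) by blast
  have xD: "x \<notin> D"
  proof
    assume "x \<in> D"
    then have "{x} \<subset> D" using D(2) xy(3) by blast
    then have "ind (Z \<union> {x})" using D(4) by blast
    moreover have "Z \<union> {x} = Kx" using KxZ by blast
    ultimately show False using Kx(1) circ_dep by simp
  qed
  have cD: "card D \<le> 2" by (rule loop_lemma[OF noF1 Zi xy(1) xZ rZx DE xD DZ D(3)]) (use D(4) in blast)
  have fD: "finite D" using DE finE by (rule finite_subset)
  obtain K' where K': "circ K'" "D \<subseteq> K'" "K' \<subseteq> Z \<union> D"
    using rel_circ_lift[OF Zi DZ DE D(3)] D(4) by blast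
  have DH: "D \<subseteq> H"
  proof
    fix d assume d: "d \<in> D"
    show "d \<in> H"
    proof (cases "d = y")
      case True then show ?thesis using xH by simp
    next
      case False
      then have "D = {y, d}" using two_elems[OF fD cD D(2) d] by blast
      then have "K' - {d} \<subseteq> insert y C" using K'(3) ZC by blast
      moreover have dK': "d \<in> K'" using d K'(2) by blast
      ultimately have "r (insert d (insert y C)) = r (insert y C)" using circ_span[OF K'(1)] by blast
      moreover have "r (insert d C) \<le> r (insert d (insert y C))" by (rule rank_mono) auto
      moreover have "r C \<le> r (insert d C)" by (rule rank_mono) auto
      ultimately have "r (insert d C) = r C" using xy(7) by linarith
      then show ?thesis unfolding H_def using d DE by blast
    qed
  qed
  have K'H: "K' \<subseteq> H" using K'(3) DH ZC CH by blast
  have "K' = Ky"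
  proof (rule ccontr)
    assume "K' \<noteq> Ky"
    then have "K' \<inter> Ky = {}" by (rule disj[OF K'(1) Ky(1) K'H KyH])
    then show False using K'(2) D(2) Ky(2) by blast
  qed
  then have "K' \<inter> Z = {}" using dxy KxZ by blast
  then have "K' \<subseteq> D" using K'(3) by blast
  then have "K' = D" using K'(2) by blast
  then have "K' \<subseteq> K" using D(1) by blast
  then have "K' = K" using circ_incomp[OF K'(1) K(1)] by blast
  then show False using K(3) DH fH \<open>K' = D\<close> by blast
qed

lemma P_setup:
  assumes "has_minor_iso M (dsum [U 0 1, U 2 2])"
  shows "\<exists>C x. ind C \<and> x \<in> E \<and> x \<notin> C \<and> r (insert x C) = r C \<and> r E = card C + 2"
proof -
  obtain C0 x f g where H: "C0 \<subseteq> E" "{x, f, g} \<subseteq> E - C0" "distinct [x, f, g]"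
    "r (insert x C0) = r C0" "r (insert f (insert g C0)) = r C0 + 2"
    using SP1[OF assms] by blast
  obtain B where B: "B \<subseteq> C0" "ind B" "card B = r C0" "\<forall>S. r (S \<union> B) = r (S \<union> C0)"
    using ext_basis[OF H(1)] by blast
  have fB: "finite B" using B(2) ind_fin by blast
  have "r ({f, g} \<union> B) = r ({f, g} \<union> C0)" using B(4) by blast
  moreover have "{f, g} \<union> C0 = insert f (insert g C0)" by blast
  ultimately have r1: "r ({f, g} \<union> B) = card B + 2" using H(5) B(3) by simp
  have fgB: "f \<notin> B" "g \<notin> B" "f \<noteq> g" using H(2,3) B(1) by auto
  have c1: "card ({f, g} \<union> B) = card B + 2" using fgB fB by simp
  have fgE: "{f, g} \<union> B \<subseteq> E" using H(1,2) B(1) by blast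
  have ind1: "ind ({f, g} \<union> B)" using ind_iff_rank[OF fgE] r1 c1 by simp
  obtain B2 where B2: "{f, g} \<union> B \<subseteq> B2" "B2 \<subseteq> E" "ind B2" "card B2 = r E"
    using extend[OF fgE ind1] by blast
  define C where "C = B2 - {f, g}"
  have Ci: "ind C" unfolding C_def using B2(3) ind_mono by blast
  have fB2: "finite B2" using B2(3) ind_fin by blast
  have cC: "card C = card B2 - 2" unfolding C_def using B2(1) fB2 fgB(3) by (simp add: card_Diff_subset)
  have rxB: "r (insert x B) = card B"
  proof -
    have "r ({x} \<union> B) = r ({x} \<union> C0)" using B(4) by blast
    then show ?thesis using H(4) B(3) by simp
  qed
  have xB: "x \<notin> B" using H(2) B(1) by blast
  have xB2: "x \<notin> B2"
  proof
    assume "x \<in> B2"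
    then have "insert x B \<subseteq> B2" using B2(1) by blast
    then have "ind (insert x B)" using B2(3) ind_mono by blast
    then have "r (insert x B) = card (insert x B)" by (rule rank_ind)
    then show False using rxB xB fB by simp
  qed
  have "r (insert x B) = r B" using rxB B(2) rank_ind by simp
  moreover have "B \<subseteq> C" unfolding C_def using B2(1) fgB by blast
  ultimately have "r (insert x C) = r C" by (rule cl_mono)
  moreover have "x \<notin> C" using xB2 unfolding C_def by blast
  moreover have "r E = card C + 2"
  proof -
    have "card B2 \<ge> 2" using B2(1) fB2 fgB(3) by (metis card_2_iff card_mono insert_is_Un le_sup_iff)
    then show ?thesis using cC B2(4) by simp
  qed
  moreover have "x \<in> E" using H(2) by blast
  ultimately show ?thesis using Ci by blast
qed

lemma Q_setup:
  assumes "has_minor_iso M (dsum [U 0 2, U 1 1])"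
  shows "\<exists>C x y. ind C \<and> x \<in> E \<and> y \<in> E \<and> x \<noteq> y \<and> x \<notin> C \<and> y \<notin> C \<and>
     r (insert x C) = r C \<and> r (insert y C) = r C \<and> r E = card C + 1"
proof -
  obtain C0 x y f where H: "C0 \<subseteq> E" "{x, y, f} \<subseteq> E - C0" "distinct [x, y, f]"
    "r (insert x C0) = r C0" "r (insert y C0) = r C0" "r (insert f C0) = r C0 + 1"
    using SP2[OF assms] by blast
  obtain B where B: "B \<subseteq> C0" "ind B" "card B = r C0" "\<forall>S. r (S \<union> B) = r (S \<union> C0)"
    using ext_basis[OF H(1)] by blast
  have fB: "finite B" using B(2) ind_fin by blast
  have "r ({f} \<union> B) = r ({f} \<union> C0)" using B(4) by blast
  then have r1: "r (insert f B) = card B + 1" using H(6) B(3) by simp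
  have fnB: "f \<notin> B" using H(2) B(1) by blast
  have fE: "insert f B \<subseteq> E" using H(1,2) B(1) by blast
  have ind1: "ind (insert f B)" using ind_iff_rank[OF fE] r1 fnB fB by simp
  obtain B2 where B2: "insert f B \<subseteq> B2" "B2 \<subseteq> E" "ind B2" "card B2 = r E"
    using extend[OF fE ind1] by blast
  define C where "C = B2 - {f}"
  have Ci: "ind C" unfolding C_def using B2(3) ind_mono by blast
  have fB2: "finite B2" using B2(3) ind_fin by blast
  have cC: "card C = card B2 - 1" unfolding C_def using B2(1) fB2 by (simp add: card_Diff_singleton)
  have BC: "B \<subseteq> C" unfolding C_def using B2(1) fnB by blast
  have gen: "\<And>z. z \<in> E - C0 \<Longrightarrow> r (insert z C0) = r C0 \<Longrightarrow> z \<notin> C \<and> r (insert z C) = r C"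
  proof -
    fix z assume z: "z \<in> E - C0" "r (insert z C0) = r C0"
    have rzB: "r (insert z B) = card B"
    proof -
      have "r ({z} \<union> B) = r ({z} \<union> C0)" using B(4) by blast
      then show ?thesis using z(2) B(3) by simp
    qed
    have zB: "z \<notin> B" using z B(1) by blast
    have zB2: "z \<notin> B2"
    proof
      assume "z \<in> B2"
      then have "insert z B \<subseteq> B2" using B2(1) by blast
      then have "ind (insert z B)" using B2(3) ind_mono by blast
      then have "r (insert z B) = card (insert z B)" by (rule rank_ind)
      then show False using rzB zB fB by simp
    qed
    have "r (insert z B) = r B" using rzB B(2) rank_ind by simp
    then have "r (insert z C) = r C" using BC by (rule cl_mono)
    then show "z \<notin> C \<and> r (insert z C) = r C" using zB2 unfolding C_def by blast
  qed
  have x: "x \<notin> C \<and> r (insert x C) = r C" using gen H(2,4) by blast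
  have y: "y \<notin> C \<and> r (insert y C) = r C" using gen H(2,5) by blast
  have "card B2 \<ge> 1" using B2(1) fB2 by (metis One_nat_def Suc_leI card_gt_0_iff empty_iff insert_subset subsetI)
  then have "r E = card C + 1" using cC B2(4) by simp
  moreover have "x \<in> E" "y \<in> E" "x \<noteq> y" using H(2,3) by auto
  ultimately show ?thesis using Ci x y by blast
qed

lemma conn_sp:
  assumes noF1: "\<not> has_minor_iso M (dsum [U 0 1, U 2 3])"
    and noF2: "\<not> has_minor_iso M (dsum [U 1 1, U 1 3])"
    and conn: "connected M"
  shows "sparse_paving M"
  unfolding sparse_paving_def
proof
  show "\<not> has_minor_iso M (dsum [U 0 1, U 2 2])"
  proof
    assume "has_minor_iso M (dsum [U 0 1, U 2 2])"
    then obtain C x where "ind C" "x \<in> E" "x \<notin> C" "r (insert x C) = r C" "r E = card C + 2"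
      using P_setup by blast
    then show False using P_contra[OF noF1 noF2 conn] by blast
  qed
  show "\<not> has_minor_iso M (dsum [U 0 2, U 1 1])"
  proof
    assume "has_minor_iso M (dsum [U 0 2, U 1 1])"
    then obtain C x y where "ind C" "x \<in> E" "y \<in> E" "x \<noteq> y" "x \<notin> C" "y \<notin> C"
      "r (insert x C) = r C" "r (insert y C) = r C" "r E = card C + 1"
      using Q_setup by blast
    then show False using Q_contra[OF noF1 noF2 conn] by blast
  qed
qed

end


lemma card_int_le_pred:
  assumes "finite D" "D \<noteq> {}"
  shows "card (I \<inter> D) \<le> card D - 1 \<longleftrightarrow> \<not> D \<subseteq> I"
proof
  assume h: "card (I \<inter> D) \<le> card D - 1"
  show "\<not> D \<subseteq> I"
  proof
    assume "D \<subseteq> I"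
    then have "I \<inter> D = D" by blast
    then have "card D \<le> card D - 1" using h by simp
    moreover have "card D > 0" using assms by (simp add: card_gt_0_iff)
    ultimately show False by linarith
  qed
next
  assume "\<not> D \<subseteq> I"
  then have "I \<inter> D \<subset> D" by blast
  then have "card (I \<inter> D) < card D" using assms(1) by (rule psubset_card_mono[rotated])
  then show "card (I \<inter> D) \<le> card D - 1" by linarith
qed

lemma card_int_le0:
  assumes "finite L"
  shows "card (I \<inter> L) \<le> 0 \<longleftrightarrow> I \<inter> L = {}"
  using assms by simp

context mat
begin

lemma fam3:
  assumes D: "D \<subseteq> E" "card D \<ge> 3" and Qne: "E - D \<noteq> {}"
    and ind: "\<And>I. I \<subseteq> E \<Longrightarrow> ind I \<longleftrightarrow> \<not> D \<subseteq> I"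
  shows "\<exists>l. 3 \<le> l \<and> l \<le> card E - 1 \<and> iso M (dsum [U (l - 1) l, U (card E - l) (card E - l)])"
proof -
  have fD: "finite D" using D(1) finE by (rule finite_subset)
  have Dne: "D \<noteq> {}" using D(2) by auto
  have fQ: "finite (E - D)" using finE by simp
  have cE: "card E - card D = card (E - D)" using D(1) fD by (simp add: card_Diff_subset)
  define B where "B = (\<lambda>i::nat. if i = 0 then D else E - D)"
  define rk where "rk = (\<lambda>i::nat. if i = 0 then card D - 1 else card (E - D))"
  have "iso M (dsum [U (card D - 1) (card D), U (card E - card D) (card E - card D)])"
  proof (rule dsumU_iso[where k = 2 and B = B and rk = rk])
    show "length [U (card D - 1) (card D), U (card E - card D) (card E - card D)] = 2" by simp
  next
    fix i :: nat assume "i < 2"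
    then have "i = 0 \<or> i = 1" by auto
    then show "[U (card D - 1) (card D), U (card E - card D) (card E - card D)] ! i = U (rk i) (card (B i))"
      using cE unfolding B_def rk_def by auto
  next
    fix i :: nat assume "i < 2" then show "finite (B i)" unfolding B_def using fD fQ by simp
  next
    fix i j :: nat assume "i < 2" "j < 2" "i \<noteq> j"
    then have "(i = 0 \<and> j = 1) \<or> (i = 1 \<and> j = 0)" by auto
    then show "B i \<inter> B j = {}" unfolding B_def by auto
  next
    have "{..<2::nat} = {0, 1}" by auto
    then have u: "(\<Union>i<2. B i) = B 0 \<union> B 1" by simp
    have "B 0 \<union> B 1 = E" unfolding B_def using D(1) by auto
    then show "(\<Union>i<2. B i) = E" using u by simp
  next
    fix I assume I: "I \<subseteq> E"
    have "(\<forall>i<2. card (I \<inter> B i) \<le> rk i) \<longleftrightarrow> card (I \<inter> B 0) \<le> rk 0 \<and> card (I \<inter> B 1) \<le> rk 1"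
      by (rule all2)
    also have "\<dots> \<longleftrightarrow> card (I \<inter> D) \<le> card D - 1"
    proof -
      have "card (I \<inter> (E - D)) \<le> card (E - D)" using fQ by (rule card_mono) auto
      then show ?thesis unfolding B_def rk_def by simp
    qed
    also have "\<dots> \<longleftrightarrow> \<not> D \<subseteq> I" by (rule card_int_le_pred[OF fD Dne])
    finally show "ind I \<longleftrightarrow> (\<forall>i<2. card (I \<inter> B i) \<le> rk i)" using ind[OF I] by simp
  qed
  moreover have "3 \<le> card D" using D(2) .
  moreover have "card D \<le> card E - 1"
  proof -
    have "card (E - D) \<ge> 1" using Qne fQ by (simp add: Suc_le_eq card_gt_0_iff)
    then show ?thesis using cE by linarith
  qed
  ultimately show ?thesis by blast
qed

lemma fam2:
  assumes L: "Lp \<subseteq> E" and P: "P = E - Lp" "card P \<ge> 3" and Lne: "Lp \<noteq> {}"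
    and ind: "\<And>I. I \<subseteq> E \<Longrightarrow> ind I \<longleftrightarrow> I \<inter> Lp = {} \<and> card (I \<inter> P) \<le> 1"
  shows "\<exists>l. 3 \<le> l \<and> l \<le> card E - 1 \<and> iso M (dsum [U 0 (card E - l), U 1 l])"
proof -
  have fL: "finite Lp" using L finE by (rule finite_subset)
  have fP: "finite P" using finE P(1) by simp
  have cP: "card P = card E - card Lp" using P(1) L fL by (simp add: card_Diff_subset)
  have "card Lp \<le> card E" using finE L by (rule card_mono)
  then have cE: "card E - card P = card Lp" using cP by linarith
  define B where "B = (\<lambda>i::nat. if i = 0 then Lp else P)"
  define rk where "rk = (\<lambda>i::nat. if i = 0 then 0::nat else 1)"
  have "iso M (dsum [U 0 (card E - card P), U 1 (card P)])"
  proof (rule dsumU_iso[where k = 2 and B = B and rk = rk])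
    show "length [U 0 (card E - card P), U 1 (card P)] = 2" by simp
  next
    fix i :: nat assume "i < 2"
    then have "i = 0 \<or> i = 1" by auto
    then show "[U 0 (card E - card P), U 1 (card P)] ! i = U (rk i) (card (B i))"
      using cE unfolding B_def rk_def by auto
  next
    fix i :: nat assume "i < 2" then show "finite (B i)" unfolding B_def using fL fP by simp
  next
    fix i j :: nat assume "i < 2" "j < 2" "i \<noteq> j"
    then have "(i = 0 \<and> j = 1) \<or> (i = 1 \<and> j = 0)" by auto
    then show "B i \<inter> B j = {}" unfolding B_def using P(1) by auto
  next
    have "{..<2::nat} = {0, 1}" by auto
    then have u: "(\<Union>i<2. B i) = B 0 \<union> B 1" by simp
    have "B 0 \<union> B 1 = E" unfolding B_def using L P(1) by auto
    then show "(\<Union>i<2. B i) = E" using u by simp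
  next
    fix I assume I: "I \<subseteq> E"
    have "(\<forall>i<2. card (I \<inter> B i) \<le> rk i) \<longleftrightarrow> card (I \<inter> B 0) \<le> rk 0 \<and> card (I \<inter> B 1) \<le> rk 1"
      by (rule all2)
    also have "\<dots> \<longleftrightarrow> I \<inter> Lp = {} \<and> card (I \<inter> P) \<le> 1"
      unfolding B_def rk_def using fL by simp
    finally show "ind I \<longleftrightarrow> (\<forall>i<2. card (I \<inter> B i) \<le> rk i)" using ind[OF I] by simp
  qed
  moreover have "card P \<le> card E - 1"
  proof -
    have "card Lp \<ge> 1" using Lne fL by (simp add: Suc_le_eq card_gt_0_iff)
    moreover have "card P \<le> card E" using P(1) finE by (simp add: card_mono)
    ultimately show ?thesis using cE by linarith
  qed
  ultimately show ?thesis using P(2) by blast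
qed


lemma fam1:
  assumes Lp: "Lp \<subseteq> E" and Q: "Q \<subseteq> E"
    and PP: "\<And>P. P \<in> PP \<Longrightarrow> P \<subseteq> E \<and> card P = 2"
    and pd: "\<And>P1 P2. P1 \<in> PP \<Longrightarrow> P2 \<in> PP \<Longrightarrow> P1 \<noteq> P2 \<Longrightarrow> P1 \<inter> P2 = {}"
    and d1: "Lp \<inter> Q = {}" and d2: "\<And>P. P \<in> PP \<Longrightarrow> P \<inter> Lp = {} \<and> P \<inter> Q = {}"
    and cov: "E = Lp \<union> Q \<union> \<Union>PP"
    and ind: "\<And>I. I \<subseteq> E \<Longrightarrow> ind I \<longleftrightarrow> I \<inter> Lp = {} \<and> (\<forall>P\<in>PP. card (I \<inter> P) \<le> 1)"
  shows "\<exists>k l. k \<le> card E \<and> l \<le> min k (card E - k) \<and>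
     iso M (dsum ([U 0 (card E - k - l)] @ replicate l (U 1 2) @ [U (k - l) (k - l)]))"
proof -
  have fL: "finite Lp" using Lp finE by (rule finite_subset)
  have fQ: "finite Q" using Q finE by (rule finite_subset)
  have PPpow: "PP \<subseteq> Pow E" using PP by blast
  have fPP: "finite PP" using PPpow finE by (meson finite_Pow_iff finite_subset)
  have fP: "\<And>P. P \<in> PP \<Longrightarrow> finite P" using PP finE finite_subset by blast
  define l where "l = card PP"
  obtain \<pi> where pi: "bij_betw \<pi> {0..<l} PP" using ex_bij_betw_nat_finite[OF fPP] l_def by blast
  have piPP: "\<And>j. j < l \<Longrightarrow> \<pi> j \<in> PP" using pi bij_betw_apply by fastforce
  have piinj: "\<And>i j. i < l \<Longrightarrow> j < l \<Longrightarrow> \<pi> i = \<pi> j \<Longrightarrow> i = j"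
    using pi unfolding bij_betw_def inj_on_def by simp
  have piB: "\<And>i. i \<noteq> 0 \<Longrightarrow> i \<le> l \<Longrightarrow> \<pi> (i - 1) \<in> PP" using piPP by simp
  have pisurj: "\<And>P. P \<in> PP \<Longrightarrow> \<exists>j<l. \<pi> j = P"
    using pi unfolding bij_betw_def by auto
  have cU: "card (\<Union>PP) = 2 * l"
  proof -
    have "pairwise disjnt PP" using pd unfolding pairwise_def disjnt_def by blast
    then have "card (\<Union>PP) = sum card PP" using fP by (rule card_Union_disjoint)
    also have "\<dots> = sum (\<lambda>_. 2) PP" using PP by (intro sum.cong) auto
    also have "\<dots> = 2 * l" unfolding l_def by simp
    finally show ?thesis .
  qed
  have fUPP: "finite (\<Union>PP)" using fPP fP by blast
  have cE: "card E = card Lp + card Q + 2 * l"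
  proof -
    have "(Lp \<union> Q) \<inter> \<Union>PP = {}" using d2 by blast
    then have "card (Lp \<union> Q \<union> \<Union>PP) = card (Lp \<union> Q) + card (\<Union>PP)"
      using fL fQ fUPP by (simp add: card_Un_disjoint)
    moreover have "card (Lp \<union> Q) = card Lp + card Q" using fL fQ d1 by (simp add: card_Un_disjoint)
    ultimately show ?thesis using cov cU by simp
  qed
  define k where "k = l + card Q"
  have e1: "card E - k - l = card Lp" using cE k_def by simp
  have e2: "k - l = card Q" using k_def by simp
  define Ms where "Ms = [U 0 (card Lp)] @ replicate l (U 1 2) @ [U (card Q) (card Q)]"
  define B where "B = (\<lambda>i::nat. if i = 0 then Lp else if i \<le> l then \<pi> (i - 1) else Q)"
  define rk where "rk = (\<lambda>i::nat. if i = 0 then 0 else if i \<le> l then 1 else card Q)"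
  have Ms_nth: "\<And>i. i < l + 2 \<Longrightarrow> Ms ! i = (if i = 0 then U 0 (card Lp) else if i \<le> l then U 1 2 else U (card Q) (card Q))"
  proof -
    fix i assume i: "i < l + 2"
    show "Ms ! i = (if i = 0 then U 0 (card Lp) else if i \<le> l then U 1 2 else U (card Q) (card Q))"
    proof (cases "i = 0")
      case True then show ?thesis unfolding Ms_def by simp
    next
      case False
      then have "Ms ! i = (replicate l (U 1 2) @ [U (card Q) (card Q)]) ! (i - 1)"
        unfolding Ms_def by (simp add: nth_Cons')
      also have "\<dots> = (if i - 1 < l then U 1 2 else U (card Q) (card Q))"
        using i False by (simp add: nth_append)
      finally show ?thesis using False by auto
    qed
  qed
  have "iso M (dsum Ms)"
  proof (rule dsumU_iso[where k = "l + 2" and B = B and rk = rk])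
    show "length Ms = l + 2" unfolding Ms_def by simp
  next
    fix i assume i: "i < l + 2"
    show "Ms ! i = U (rk i) (card (B i))"
    proof (cases "i = 0")
      case True then show ?thesis using Ms_nth[OF i] unfolding B_def rk_def by simp
    next
      case False
      show ?thesis
      proof (cases "i \<le> l")
        case True
        then have "\<pi> (i - 1) \<in> PP" using False piPP by simp
        then have "card (B i) = 2" unfolding B_def using PP False True by simp
        then show ?thesis using Ms_nth[OF i] False True unfolding rk_def by simp
      next
        case F2: False
        then show ?thesis using Ms_nth[OF i] False unfolding B_def rk_def by simp
      qed
    qed
  next
    fix i assume "i < l + 2"
    then show "finite (B i)" unfolding B_def using fL fQ fP piPP by auto
  next
    fix i j assume ij: "i < l + 2" "j < l + 2" "i \<noteq> j"
    show "B i \<inter> B j = {}"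
    proof (cases "i = 0")
      case True
      show ?thesis
      proof (cases "j \<le> l")
        case jl: True
        then show ?thesis unfolding B_def using True ij d2 piB[of j] by auto
      next
        case False
        then show ?thesis unfolding B_def using True ij d1 by auto
      qed
    next
      case i0: False
      show ?thesis
      proof (cases "i \<le> l")
        case True
        have Pi: "\<pi> (i - 1) \<in> PP" using i0 True piPP by simp
        show ?thesis
        proof (cases "j = 0")
          case True then show ?thesis unfolding B_def using i0 \<open>i \<le> l\<close> Pi d2 by auto
        next
          case j0: False
          show ?thesis
          proof (cases "j \<le> l")
            case True
            have Pj: "\<pi> (j - 1) \<in> PP" using j0 True piPP by simp
            have "\<pi> (i - 1) \<noteq> \<pi> (j - 1)"
            proof
              assume "\<pi> (i - 1) = \<pi> (j - 1)"
              then have "i - 1 = j - 1" using piinj i0 j0 \<open>i \<le> l\<close> True by simp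
              then show False using i0 j0 ij by simp
            qed
            then show ?thesis unfolding B_def using i0 j0 \<open>i \<le> l\<close> True pd Pi Pj by simp
          next
            case False then show ?thesis unfolding B_def using i0 j0 \<open>i \<le> l\<close> Pi d2 by auto
          qed
        qed
      next
        case False
        then have "i = l + 1" using ij by simp
        then have "j = 0 \<or> (j \<noteq> 0 \<and> j \<le> l)" using ij by auto
        then show ?thesis unfolding B_def using i0 False d1 d2 piB[of j] by auto
      qed
    qed
  next
    show "(\<Union>i<l + 2. B i) = E"
    proof
      have BE: "\<And>i. B i \<subseteq> E"
      proof -
        fix i
        show "B i \<subseteq> E"
        proof (cases "i \<noteq> 0 \<and> i \<le> l")
          case True then show ?thesis unfolding B_def using piB[of i] PP by auto
        next
          case False then show ?thesis unfolding B_def using Lp Q by auto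
        qed
      qed
      then show "(\<Union>i<l + 2. B i) \<subseteq> E" by blast
    next
      show "E \<subseteq> (\<Union>i<l + 2. B i)"
      proof
        fix e assume "e \<in> E"
        then have "e \<in> Lp \<or> e \<in> Q \<or> (\<exists>P\<in>PP. e \<in> P)" using cov by blast
        moreover have "e \<in> Lp \<Longrightarrow> e \<in> B 0" unfolding B_def by simp
        moreover have "e \<in> Q \<Longrightarrow> e \<in> B (l + 1)" unfolding B_def by simp
        moreover have "\<And>P. P \<in> PP \<Longrightarrow> e \<in> P \<Longrightarrow> \<exists>i<l + 2. e \<in> B i"
        proof -
          fix P assume "P \<in> PP" "e \<in> P"
          then obtain j where "j < l" "\<pi> j = P" using pisurj by blast
          then have "e \<in> B (j + 1)" unfolding B_def using \<open>e \<in> P\<close> by simp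
          then show "\<exists>i<l + 2. e \<in> B i" using \<open>j < l\<close> by (intro exI[of _ "j + 1"]) simp
        qed
        ultimately show "e \<in> (\<Union>i<l + 2. B i)" by force
      qed
    qed
  next
    fix I assume I: "I \<subseteq> E"
    have "(\<forall>i<l + 2. card (I \<inter> B i) \<le> rk i) \<longleftrightarrow> I \<inter> Lp = {} \<and> (\<forall>P\<in>PP. card (I \<inter> P) \<le> 1)"
    proof
      assume h: "\<forall>i<l + 2. card (I \<inter> B i) \<le> rk i"
      have "card (I \<inter> Lp) \<le> 0" using h[rule_format, of 0] unfolding B_def rk_def by simp
      then have "I \<inter> Lp = {}" using fL by simp
      moreover have "\<forall>P\<in>PP. card (I \<inter> P) \<le> 1"
      proof
        fix P assume "P \<in> PP"
        then obtain j where j: "j < l" "\<pi> j = P" using pisurj by blast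
        have "card (I \<inter> B (j + 1)) \<le> rk (j + 1)" using h j by simp
        then show "card (I \<inter> P) \<le> 1" unfolding B_def rk_def using j by simp
      qed
      ultimately show "I \<inter> Lp = {} \<and> (\<forall>P\<in>PP. card (I \<inter> P) \<le> 1)" by blast
    next
      assume h: "I \<inter> Lp = {} \<and> (\<forall>P\<in>PP. card (I \<inter> P) \<le> 1)"
      show "\<forall>i<l + 2. card (I \<inter> B i) \<le> rk i"
      proof (intro allI impI)
        fix i assume i: "i < l + 2"
        show "card (I \<inter> B i) \<le> rk i"
        proof (cases "i = 0")
          case True then show ?thesis unfolding B_def rk_def using h by simp
        next
          case False
          show ?thesis
          proof (cases "i \<le> l")
            case True
            then have "\<pi> (i - 1) \<in> PP" using False piPP by simp
            then show ?thesis unfolding B_def rk_def using h False True by simp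
          next
            case F2: False
            have "card (I \<inter> Q) \<le> card Q" using fQ by (rule card_mono) auto
            then show ?thesis unfolding B_def rk_def using False F2 by simp
          qed
        qed
      qed
    qed
    then show "ind I \<longleftrightarrow> (\<forall>i<l + 2. card (I \<inter> B i) \<le> rk i)" using ind[OF I] by simp
  qed
  moreover have "Ms = [U 0 (card E - k - l)] @ replicate l (U 1 2) @ [U (k - l) (k - l)]"
    unfolding Ms_def using e1 e2 by simp
  moreover have "k \<le> card E" "l \<le> min k (card E - k)" using cE k_def by auto
  ultimately show ?thesis by metis
qed


definition par where "par p q \<longleftrightarrow> p \<noteq> q \<and> circ {p, q}"

lemma circ_small:
  assumes "circ K" "card K \<le> 2"
  shows "(\<exists>e. K = {e}) \<or> (\<exists>p q. p \<noteq> q \<and> K = {p, q})"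
proof -
  have "K \<noteq> {}" using assms(1) circ_ne by blast
  moreover have "finite K" using assms(1) circ_fin by blast
  ultimately have "card K \<noteq> 0" by simp
  then have "card K = 1 \<or> card K = 2" using assms(2) by linarith
  then show ?thesis
  proof
    assume "card K = 1"
    then have "\<exists>e. K = {e}" using card_1_singleton_iff[of K] by simp
    then show ?thesis by blast
  next
    assume "card K = 2"
    then obtain p q where "K = {p, q}" "p \<noteq> q" using card_2_iff[of K] by blast
    then show ?thesis by blast
  qed
qed

lemma par_sym: "par p q \<Longrightarrow> par q p" unfolding par_def by (auto simp: insert_commute)

lemma par_E: "par p q \<Longrightarrow> p \<in> E \<and> q \<in> E" unfolding par_def using circ_sub by blast

lemma par_nl: "par p q \<Longrightarrow> \<not> circ {p}"
proof
  assume "par p q" "circ {p}"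
  then have "{p} = {p, q}" using circ_incomp[of "{p}" "{p, q}"] unfolding par_def by blast
  then show False using \<open>par p q\<close> unfolding par_def by auto
qed

lemma par_trans:
  assumes "par p q" "par q s" "p \<noteq> s"
  shows "par p s"
proof -
  have c1: "circ {p, q}" "circ {q, s}" "p \<noteq> q" using assms unfolding par_def by auto
  obtain K3 where K3: "circ K3" "p \<in> K3" "K3 \<subseteq> ({p, q} \<union> {q, s}) - {q}"
    using strong_elim[OF c1(1) c1(2), of q p] c1(3) assms(3) by auto
  have "K3 \<subseteq> {p, s}" using K3(3) by blast
  then have "K3 = {p} \<or> K3 = {p, s}" using K3(2) by blast
  moreover have "\<not> circ {p}" using par_nl assms(1) by blast
  ultimately have "K3 = {p, s}" using K3(1) by blast
  then show ?thesis unfolding par_def using K3(1) assms(3) by simp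
qed

lemma ind_small:
  assumes sc: "\<And>K. circ K \<Longrightarrow> card K \<le> 2" and I: "I \<subseteq> E"
  shows "ind I \<longleftrightarrow> (\<forall>e\<in>I. \<not> circ {e}) \<and> (\<forall>p\<in>I. \<forall>q\<in>I. \<not> par p q)"
proof
  assume "ind I"
  then have nc: "\<And>K. circ K \<Longrightarrow> \<not> K \<subseteq> I" using ind_nocirc[OF I] by blast
  show "(\<forall>e\<in>I. \<not> circ {e}) \<and> (\<forall>p\<in>I. \<forall>q\<in>I. \<not> par p q)"
  proof (intro conjI ballI notI)
    fix e assume "e \<in> I" "circ {e}" then show False using nc by blast
  next
    fix p q assume "p \<in> I" "q \<in> I" "par p q" then show False using nc unfolding par_def by blast
  qed
next
  assume h: "(\<forall>e\<in>I. \<not> circ {e}) \<and> (\<forall>p\<in>I. \<forall>q\<in>I. \<not> par p q)"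
  have "\<forall>K. circ K \<longrightarrow> \<not> K \<subseteq> I"
  proof (intro allI impI notI)
    fix K assume K: "circ K" "K \<subseteq> I"
    have "(\<exists>e. K = {e}) \<or> (\<exists>p q. p \<noteq> q \<and> K = {p, q})" using circ_small[OF K(1) sc[OF K(1)]] .
    then show False
    proof
      assume "\<exists>e. K = {e}" then show False using h K by blast
    next
      assume "\<exists>p q. p \<noteq> q \<and> K = {p, q}"
      then obtain p q where "p \<noteq> q" "K = {p, q}" by blast
      then have "par p q" unfolding par_def using K by simp
      then show False using h K \<open>K = {p, q}\<close> by blast
    qed
  qed
  then show "ind I" using ind_nocirc[OF I] by blast
qed

lemma r_empty: "r {} = 0" using rank_le_card[of "{}"] by simp

lemma small_circ:
  assumes noF2: "\<not> has_minor_iso M (dsum [U 1 1, U 1 3])"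
    and nc: "\<not> connected M" and sc: "\<And>K. circ K \<Longrightarrow> card K \<le> 2"
  shows "(\<exists>k l. k \<le> card E \<and> l \<le> min k (card E - k) \<and>
            iso M (dsum ([U 0 (card E - k - l)] @ replicate l (U 1 2) @ [U (k - l) (k - l)]))) \<or>
         (\<exists>l. 3 \<le> l \<and> l \<le> card E - 1 \<and> iso M (dsum [U 0 (card E - l), U 1 l]))"
proof -
  define Lp where "Lp = {e \<in> E. circ {e}}"
  have LpE: "Lp \<subseteq> E" unfolding Lp_def by blast
  have ic: "\<And>I. I \<subseteq> E \<Longrightarrow> ind I \<longleftrightarrow> I \<inter> Lp = {} \<and> (\<forall>p\<in>I. \<forall>q\<in>I. \<not> par p q)"
  proof -
    fix I assume I: "I \<subseteq> E"
    have "(\<forall>e\<in>I. \<not> circ {e}) \<longleftrightarrow> I \<inter> Lp = {}" unfolding Lp_def using I by blast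
    then show "ind I \<longleftrightarrow> I \<inter> Lp = {} \<and> (\<forall>p\<in>I. \<forall>q\<in>I. \<not> par p q)" using ind_small[OF sc I] by simp
  qed
  have parL: "\<And>p q. par p q \<Longrightarrow> p \<notin> Lp" unfolding Lp_def using par_nl by blast
  show ?thesis
  proof (cases "\<exists>p q s. par p q \<and> par p s \<and> q \<noteq> s")
    case True
    then obtain p q s where pqs: "par p q" "par p s" "q \<noteq> s" by blast
    define P where "P = E - Lp"
    have qs: "par q s" using par_trans[OF par_sym[OF pqs(1)] pqs(2) pqs(3)] .
    have pw: "\<And>u v. u \<in> {p, q, s} \<Longrightarrow> v \<in> {p, q, s} \<Longrightarrow> u \<noteq> v \<Longrightarrow> par u v"
      using pqs qs par_sym by auto
    have nl: "\<And>u. u \<in> E \<Longrightarrow> u \<notin> Lp \<Longrightarrow> ind {u}"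
    proof -
      fix u assume "u \<in> E" "u \<notin> Lp"
      then show "ind {u}" using ic[of "{u}"] unfolding par_def by auto
    qed
    have pqsE: "p \<in> E" "q \<in> E" "s \<in> E" using par_E pqs by blast+
    have pqsL: "p \<notin> Lp" "q \<notin> Lp" "s \<notin> Lp" using parL pqs par_sym by blast+
    have allpar: "\<And>t. t \<in> P \<Longrightarrow> t \<noteq> p \<Longrightarrow> par t p"
    proof (rule ccontr)
      fix t assume t: "t \<in> P" "t \<noteq> p" "\<not> par t p"
      have tE: "t \<in> E" "t \<notin> Lp" using t unfolding P_def by auto
      have tq: "t \<noteq> q" using t(3) par_sym[OF pqs(1)] by blast
      have ts: "t \<noteq> s" using t(3) par_sym[OF pqs(2)] by blast
      have ntp: "\<And>u. u \<in> {p, q, s} \<Longrightarrow> \<not> par t u"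
      proof
        fix u assume u: "u \<in> {p, q, s}" "par t u"
        have "u \<noteq> p \<Longrightarrow> par t p" using par_trans[OF u(2)] pw[of u p] u(1) t(2) by blast
        then show False using t(3) u by blast
      qed
      have rsing: "\<And>y. y \<in> {p, q, s} \<Longrightarrow> r {y} = 1"
      proof -
        fix y assume "y \<in> {p, q, s}"
        then have "ind {y}" using nl pqsE pqsL by blast
        then show "r {y} = 1" using rank_ind by simp
      qed
      have rS: "\<And>S. S \<subseteq> {p, q, s} \<Longrightarrow> S \<noteq> {} \<Longrightarrow> r S = 1"
      proof -
        fix S assume S: "S \<subseteq> {p, q, s}" "S \<noteq> {}"
        then obtain y where y: "y \<in> S" by blast
        have "ind {y}" using nl pqsE pqsL y S by blast
        then have "1 \<le> r S" using rank_ge[of "{y}" S] y by simp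
        moreover have "r S \<le> 1"
        proof -
          obtain I where I: "I \<subseteq> S" "ind I" "card I = r S" using rank_ex by blast
          have "finite I" using I(2) ind_fin by blast
          moreover have "\<forall>u\<in>I. \<forall>v\<in>I. u = v"
          proof (intro ballI)
            fix u v assume uv: "u \<in> I" "v \<in> I"
            show "u = v"
            proof (rule ccontr)
              assume "u \<noteq> v"
              moreover have "u \<in> {p, q, s}" "v \<in> {p, q, s}" using uv I(1) S(1) by blast+
              ultimately have "par u v" using pw by blast
              moreover have "I \<subseteq> E" using I(2) ind_sub by blast
              ultimately show False using ic I(2) uv by blast
            qed
          qed
          ultimately have "card I \<le> 1" using card_le_Suc0_iff_eq by auto
          then show ?thesis using I by simp
        qed
        ultimately show "r S = 1" by simp
      qed
      have el: "{t, p, q, s} \<subseteq> E" using tE pqsE by blast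
      have dist: "distinct [t, p, q, s]" using t(2) tq ts pqs unfolding par_def by auto
      show False
      proof (rule F2_data[OF noF2 _ el dist])
        show "{} \<subseteq> E" by simp
        show "{t, p, q, s} \<inter> {} = {}" by simp
      next
        fix y assume "y \<in> {p, q, s}"
        then show "r (insert y {}) = r {} + 1" using rsing r_empty by simp
      next
        show "r ({} \<union> {p, q, s}) = r {} + 1" using rS[of "{p, q, s}"] r_empty by simp
      next
        fix S assume S: "S \<subseteq> {p, q, s}"
        show "r (insert t (S \<union> {})) = r (S \<union> {}) + 1"
        proof (cases "S = {}")
          case True
          then show ?thesis using nl[OF tE] rank_ind r_empty by simp
        next
          case False
          then obtain u where u: "u \<in> S" by blast
          have uE: "u \<in> E" "u \<notin> Lp" using u S pqsE pqsL by auto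
          have "ind {t, u}"
          proof -
            have "{t, u} \<subseteq> E" using tE uE by blast
            moreover have "{t, u} \<inter> Lp = {}" using tE(2) uE(2) by simp
            moreover have "\<forall>a\<in>{t, u}. \<forall>b\<in>{t, u}. \<not> par a b"
            proof (intro ballI notI)
              fix a b assume ab: "a \<in> {t, u}" "b \<in> {t, u}" "par a b"
              have nt: "\<not> par t u" using ntp[of u] u S by blast
              have "a \<noteq> b" using ab(3) unfolding par_def by blast
              then have "(a = t \<and> b = u) \<or> (a = u \<and> b = t)" using ab(1,2) by blast
              then show False using ab(3) nt par_sym by blast
            qed
            ultimately show ?thesis using ic by blast
          qed
          moreover have "card {t, u} = 2" using u S t(2) tq ts by auto
          ultimately have "2 \<le> r (insert t S)" using rank_ge[of "{t, u}" "insert t S"] u by auto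
          moreover have "r (insert t S) \<le> r S + 1" by (rule rank_insert_le)
          moreover have "r S = 1" using rS S False by blast
          ultimately show ?thesis by simp
        qed
      qed
    qed
    have Ppar: "\<And>u v. u \<in> P \<Longrightarrow> v \<in> P \<Longrightarrow> u \<noteq> v \<Longrightarrow> par u v"
    proof -
      fix u v assume uv: "u \<in> P" "v \<in> P" "u \<noteq> v"
      show "par u v"
      proof (cases "u = p")
        case True then show ?thesis using allpar[of v] uv par_sym by blast
      next
        case False
        show ?thesis
        proof (cases "v = p")
          case True then show ?thesis using allpar[of u] uv False by blast
        next
          case F2: False
          then show ?thesis using par_trans[OF allpar[of u] par_sym[OF allpar[of v]]] uv False by blast
        qed
      qed
    qed
    have Lne: "Lp \<noteq> {}"
    proof
      assume "Lp = {}"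
      then have "connected M"
        unfolding connected_def P_def using Ppar unfolding P_def par_def by auto
      then show False using nc by blast
    qed
    have "{p, q, s} \<subseteq> P" unfolding P_def using pqsE pqsL by blast
    moreover have "card {p, q, s} = 3" using pqs unfolding par_def by auto
    moreover have "finite P" unfolding P_def using finE by simp
    ultimately have cP: "card P \<ge> 3" by (metis card_mono)
    have "\<exists>l. 3 \<le> l \<and> l \<le> card E - 1 \<and> iso M (dsum [U 0 (card E - l), U 1 l])"
    proof (rule fam2[OF LpE P_def cP Lne])
      fix I assume I: "I \<subseteq> E"
      have fIP: "finite (I \<inter> P)" using \<open>finite P\<close> by simp
      show "ind I \<longleftrightarrow> I \<inter> Lp = {} \<and> card (I \<inter> P) \<le> 1"
      proof
        assume "ind I"
        then have h: "I \<inter> Lp = {}" "\<forall>p\<in>I. \<forall>q\<in>I. \<not> par p q" using ic[OF I] by blast+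
        have "\<forall>u\<in>I \<inter> P. \<forall>v\<in>I \<inter> P. u = v" using h(2) Ppar by blast
        then show "I \<inter> Lp = {} \<and> card (I \<inter> P) \<le> 1" using h(1) card_le_Suc0_iff_eq[OF fIP] by simp
      next
        assume h: "I \<inter> Lp = {} \<and> card (I \<inter> P) \<le> 1"
        then have "\<forall>u\<in>I \<inter> P. \<forall>v\<in>I \<inter> P. u = v" using card_le_Suc0_iff_eq[OF fIP] by simp
        moreover have "\<And>u v. par u v \<Longrightarrow> u \<in> P \<and> v \<in> P"
          unfolding P_def using par_E parL par_sym by blast
        ultimately have "\<forall>p\<in>I. \<forall>q\<in>I. \<not> par p q" unfolding par_def by blast
        then show "ind I" using ic[OF I] h by blast
      qed
    qed
    then show ?thesis by blast
  next
    case False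
    then have notri: "\<And>p q s. par p q \<Longrightarrow> par p s \<Longrightarrow> q = s" by blast
    define PP where "PP = {{p, q} | p q. par p q}"
    define Q where "Q = {e \<in> E. \<not> circ {e} \<and> (\<forall>q. \<not> par e q)}"
    have other: "\<And>P c. P \<in> PP \<Longrightarrow> c \<in> P \<Longrightarrow> \<exists>w. par c w \<and> P = {c, w}"
    proof -
      fix P c assume "P \<in> PP" "c \<in> P"
      then obtain p q where "par p q" "P = {p, q}" unfolding PP_def by blast
      then show "\<exists>w. par c w \<and> P = {c, w}" using \<open>c \<in> P\<close> par_sym by (auto simp: insert_commute)
    qed
    have "\<exists>k l. k \<le> card E \<and> l \<le> min k (card E - k) \<and>
            iso M (dsum ([U 0 (card E - k - l)] @ replicate l (U 1 2) @ [U (k - l) (k - l)]))"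
    proof (rule fam1[OF LpE])
      show "Q \<subseteq> E" unfolding Q_def by blast
    next
      fix P assume "P \<in> PP"
      then obtain p q where "par p q" "P = {p, q}" unfolding PP_def by blast
      then show "P \<subseteq> E \<and> card P = 2" using par_E unfolding par_def by auto
    next
      fix P1 P2 assume P: "P1 \<in> PP" "P2 \<in> PP" "P1 \<noteq> P2"
      show "P1 \<inter> P2 = {}"
      proof (rule ccontr)
        assume "P1 \<inter> P2 \<noteq> {}"
        then obtain c where c: "c \<in> P1" "c \<in> P2" by blast
        obtain w1 where o1: "par c w1" "P1 = {c, w1}" using other P(1) c(1) by blast
        obtain w2 where o2: "par c w2" "P2 = {c, w2}" using other P(2) c(2) by blast
        have "w1 = w2" using notri o1(1) o2(1) by blast
        then show False using o1 o2 P(3) by simp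
      qed
    next
      show "Lp \<inter> Q = {}" unfolding Lp_def Q_def by blast
    next
      fix P assume "P \<in> PP"
      then obtain p q where pq: "par p q" "P = {p, q}" unfolding PP_def by blast
      have "p \<notin> Lp" "q \<notin> Lp" using parL pq par_sym by blast+
      moreover have "p \<notin> Q" "q \<notin> Q" unfolding Q_def using pq par_sym by blast+
      ultimately show "P \<inter> Lp = {} \<and> P \<inter> Q = {}" using pq by blast
    next
      show "E = Lp \<union> Q \<union> \<Union>PP"
      proof
        show "E \<subseteq> Lp \<union> Q \<union> \<Union>PP"
        proof
          fix e assume e: "e \<in> E"
          show "e \<in> Lp \<union> Q \<union> \<Union>PP"
          proof (cases "\<exists>q. par e q")
            case True
            then obtain q where "par e q" by blast
            then have "{e, q} \<in> PP" unfolding PP_def by blast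
            then show ?thesis by blast
          next
            case False
            then show ?thesis unfolding Lp_def Q_def using e by blast
          qed
        qed
      next
        have "\<Union>PP \<subseteq> E" unfolding PP_def using par_E by blast
        then show "Lp \<union> Q \<union> \<Union>PP \<subseteq> E" using LpE unfolding Q_def by blast
      qed
    next
      fix I assume I: "I \<subseteq> E"
      show "ind I \<longleftrightarrow> I \<inter> Lp = {} \<and> (\<forall>P\<in>PP. card (I \<inter> P) \<le> 1)"
      proof
        assume "ind I"
        then have h: "I \<inter> Lp = {}" "\<forall>p\<in>I. \<forall>q\<in>I. \<not> par p q" using ic[OF I] by blast+
        have "\<forall>P\<in>PP. card (I \<inter> P) \<le> 1"
        proof
          fix P assume P: "P \<in> PP"
          then obtain p q where pq: "par p q" "P = {p, q}" unfolding PP_def by blast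
          have "finite (I \<inter> P)" using pq by simp
          moreover have "\<forall>u\<in>I \<inter> P. \<forall>v\<in>I \<inter> P. u = v"
          proof (intro ballI)
            fix u v assume uv: "u \<in> I \<inter> P" "v \<in> I \<inter> P"
            show "u = v"
            proof (rule ccontr)
              assume "u \<noteq> v"
              then have "par u v" using uv pq par_sym by auto
              then show False using h(2) uv by blast
            qed
          qed
          ultimately show "card (I \<inter> P) \<le> 1" using card_le_Suc0_iff_eq by auto
        qed
        then show "I \<inter> Lp = {} \<and> (\<forall>P\<in>PP. card (I \<inter> P) \<le> 1)" using h(1) by blast
      next
        assume h: "I \<inter> Lp = {} \<and> (\<forall>P\<in>PP. card (I \<inter> P) \<le> 1)"
        have "\<forall>p\<in>I. \<forall>q\<in>I. \<not> par p q"
        proof (intro ballI notI)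
          fix u v assume uv: "u \<in> I" "v \<in> I" "par u v"
          then have "{u, v} \<in> PP" unfolding PP_def by blast
          then have "card (I \<inter> {u, v}) \<le> 1" using h by blast
          moreover have "I \<inter> {u, v} = {u, v}" using uv by blast
          moreover have "card {u, v} = 2" using uv(3) unfolding par_def by simp
          ultimately show False by simp
        qed
        then show "ind I" using ic[OF I] h by blast
      qed
    qed
    then show ?thesis by blast
  qed
qed

end


context mat
begin

lemma part1:
  assumes noF1: "\<not> has_minor_iso M (dsum [U 0 1, U 2 3])"
    and noF2: "\<not> has_minor_iso M (dsum [U 1 1, U 1 3])"
    and nc: "\<not> connected M"
  shows "(\<exists>k l. k \<le> card E \<and> l \<le> min k (card E - k) \<and>
            iso M (dsum ([U 0 (card E - k - l)] @ replicate l (U 1 2) @ [U (k - l) (k - l)]))) \<or>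
         (\<exists>l. 3 \<le> l \<and> l \<le> card E - 1 \<and> iso M (dsum [U 0 (card E - l), U 1 l])) \<or>
         (\<exists>l. 3 \<le> l \<and> l \<le> card E - 1 \<and> iso M (dsum [U (l - 1) l, U (card E - l) (card E - l)]))"
proof (cases "\<exists>x. circ {x}")
  case True
  then obtain x where x: "circ {x}" by blast
  have xE: "x \<in> E" using circ_sub x by blast
  have "r {x} = 0" using circ_rank(1)[OF x] by simp
  then have rx: "r (insert x {}) = r {}" using r_empty by simp
  have sc: "\<And>K. circ K \<Longrightarrow> card K \<le> 2"
  proof -
    fix K assume K: "circ K"
    show "card K \<le> 2"
    proof (cases "x \<in> K")
      case True
      then have "{x} = K" using circ_incomp[OF x K] by blast
      then show ?thesis by auto
    next
      case False
      have KE: "K \<subseteq> E" using K circ_sub by blast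
      show ?thesis
      proof (rule loop_lemma[OF noF1 ind_empty xE _ rx KE False])
        show "x \<notin> {}" by simp
        show "K \<inter> {} = {}" by simp
        show "\<not> ind ({} \<union> K)" using circ_dep[OF K] by simp
        fix S assume "S \<subset> K" then show "ind ({} \<union> S)" using circ_min[OF K] by simp
      qed
    qed
  qed
  then show ?thesis using small_circ[OF noF2 nc] by blast
next
  case noloop: False
  show ?thesis
  proof (cases "\<exists>z\<in>E. \<forall>K. circ K \<longrightarrow> z \<notin> K")
    case True
    then obtain z where z: "z \<in> E" "\<And>K. circ K \<Longrightarrow> z \<notin> K" by blast
    have Wc: "r (E - {z}) < r E"
    proof (rule ccontr)
      assume "\<not> r (E - {z}) < r E"
      moreover have "r (E - {z}) \<le> r E" by (rule rank_mono) auto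
      ultimately have "r (E - {z}) = r E" by simp
      moreover have "insert z (E - {z}) = E" using z(1) by blast
      ultimately have "r (insert z (E - {z})) = r (E - {z})" by simp
      then obtain K where "circ K" "z \<in> K" using span_circ[of "E - {z}" z] z(1) by blast
      then show False using z(2) by blast
    qed
    have disj: "\<And>K1 K2. circ K1 \<Longrightarrow> circ K2 \<Longrightarrow> K1 \<noteq> K2 \<Longrightarrow> K1 \<inter> K2 = {}"
      using coloop_lemma[OF noF2 subset_refl z(1) Wc] circ_sub by blast
    show ?thesis
    proof (cases "\<exists>D. circ D \<and> card D \<ge> 3")
      case True
      then obtain D where D: "circ D" "card D \<ge> 3" by blast
      have DE: "D \<subseteq> E" using D(1) circ_sub by blast
      have uniq: "\<And>D'. circ D' \<Longrightarrow> D' = D"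
      proof (rule ccontr)
        fix D' assume D': "circ D'" "D' \<noteq> D"
        have dd: "D' \<inter> D = {}" using disj D'(1) D(1) D'(2) by blast
        obtain y where y: "y \<in> D'" using circ_ne[OF D'(1)] by blast
        define Z where "Z = D' - {y}"
        have Zi: "ind Z" unfolding Z_def by (rule circ_del[OF D'(1) y])
        have yE: "y \<in> E" using y D'(1) circ_sub by blast
        have yZ: "y \<notin> Z" unfolding Z_def by blast
        have rZ: "r (insert y Z) = r Z" by (rule circ_span[OF D'(1) y]) (simp add: Z_def)
        have yD: "y \<notin> D" using dd y by blast
        have DZ: "D \<inter> Z = {}" using dd unfolding Z_def by blast
        have dep: "\<not> ind (Z \<union> D)" using circ_dep[OF D(1)] ind_mono by blast
        have mn: "\<And>S. S \<subset> D \<Longrightarrow> ind (Z \<union> S)"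
        proof -
          fix S assume S: "S \<subset> D"
          have "Z \<union> S \<subseteq> E" using Zi ind_sub S DE by blast
          moreover have "\<forall>K. circ K \<longrightarrow> \<not> K \<subseteq> Z \<union> S"
          proof (intro allI impI notI)
            fix K assume K: "circ K" "K \<subseteq> Z \<union> S"
            have "K \<noteq> D'" using K(2) y yZ S yD by blast
            then have "K \<inter> D' = {}" using disj K(1) D'(1) by blast
            then have "K \<subseteq> S" using K(2) unfolding Z_def by blast
            then have "K \<subseteq> D" using S by blast
            then have "K = D" using circ_incomp[OF K(1) D(1)] by blast
            then show False using \<open>K \<subseteq> S\<close> S by blast
          qed
          ultimately show "ind (Z \<union> S)" using ind_nocirc by blast
        qed
        have "card D \<le> 2" by (rule loop_lemma[OF noF1 Zi yE yZ rZ DE yD DZ dep mn])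
        then show False using D(2) by simp
      qed
      have indD: "\<And>I. I \<subseteq> E \<Longrightarrow> ind I \<longleftrightarrow> \<not> D \<subseteq> I"
      proof -
        fix I assume I: "I \<subseteq> E"
        show "ind I \<longleftrightarrow> \<not> D \<subseteq> I" using ind_nocirc[OF I] uniq D(1) by blast
      qed
      have "z \<notin> D" using z(2) D(1) by blast
      then have "E - D \<noteq> {}" using z(1) by blast
      then show ?thesis using fam3[OF DE D(2) _ indD] by blast
    next
      case False
      then have "\<And>K. circ K \<Longrightarrow> card K \<le> 2" by fastforce
      then show ?thesis using small_circ[OF noF2 nc] by blast
    qed
  next
    case False
    then have inc: "\<And>z. z \<in> E \<Longrightarrow> \<exists>K. circ K \<and> z \<in> K" by blast
    show ?thesis
    proof (cases "\<exists>D. circ D \<and> card D \<ge> 3")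
      case True
      then obtain D where D: "circ D" "card D \<ge> 3" by blast
      have DE: "D \<subseteq> E" using D(1) circ_sub by blast
      obtain d where d: "d \<in> D" using circ_ne[OF D(1)] by blast
      obtain u v where uv: "u \<in> E" "v \<in> E" "u \<noteq> v" "\<not> (\<exists>K. circ K \<and> u \<in> K \<and> v \<in> K)"
        using nc unfolding connected_def by blast
      have "\<not> cc u v" using uv unfolding cc_def by blast
      then have "\<not> cc u d \<or> \<not> cc v d" using cc_trans cc_sym by blast
      then obtain w where w: "w \<in> E" "\<not> cc w d" using uv by blast
      obtain Cw where Cw: "circ Cw" "w \<in> Cw" using inc[OF w(1)] by blast
      define Z where "Z = Cw - {w}"
      have Zi: "ind Z" unfolding Z_def by (rule circ_del[OF Cw])
      have wZ: "w \<notin> Z" unfolding Z_def by blast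
      have rZ: "r (insert w Z) = r Z" by (rule circ_span[OF Cw]) (simp add: Z_def)
      have ccC: "\<And>c. c \<in> Cw \<Longrightarrow> cc w c" unfolding cc_def using Cw by blast
      have ccD: "\<And>c. c \<in> D \<Longrightarrow> cc c d" unfolding cc_def using D(1) d by blast
      have wD: "w \<notin> D" using ccD w(2) by blast
      have DZ: "D \<inter> Z = {}"
      proof (rule ccontr)
        assume "D \<inter> Z \<noteq> {}"
        then obtain c where "c \<in> D" "c \<in> Z" by blast
        then have "cc w c" "cc c d" using ccC ccD unfolding Z_def by auto
        then show False using w(2) cc_trans by blast
      qed
      have dep: "\<not> ind (Z \<union> D)" using circ_dep[OF D(1)] ind_mono by blast
      have mn: "\<And>S. S \<subset> D \<Longrightarrow> ind (Z \<union> S)"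
      proof -
        fix S assume S: "S \<subset> D"
        have "Z \<union> S \<subseteq> E" using Zi ind_sub S DE by blast
        moreover have "\<forall>K. circ K \<longrightarrow> \<not> K \<subseteq> Z \<union> S"
        proof (intro allI impI notI)
          fix K assume K: "circ K" "K \<subseteq> Z \<union> S"
          show False
          proof (cases "K \<subseteq> Z")
            case True
            then have "K = Cw" using circ_incomp[OF K(1) Cw(1)] unfolding Z_def by blast
            then show False using True Cw(2) wZ by blast
          next
            case nZ: False
            show False
            proof (cases "K \<subseteq> S")
              case True
              then have "K = D" using circ_incomp[OF K(1) D(1)] S by blast
              then show False using True S by blast
            next
              case False
              then obtain c where c: "c \<in> K" "c \<in> Z" using K(2) by blast
              obtain s where s: "s \<in> K" "s \<in> S" using nZ K(2) by blast
              have "cc w c" using ccC c(2) unfolding Z_def by blast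
              moreover have "cc c s" unfolding cc_def using K(1) c(1) s(1) by blast
              moreover have "cc s d" using ccD s(2) S by blast
              ultimately show False using w(2) cc_trans by blast
            qed
          qed
        qed
        ultimately show "ind (Z \<union> S)" using ind_nocirc by blast
      qed
      have "card D \<le> 2" by (rule loop_lemma[OF noF1 Zi w(1) wZ rZ DE wD DZ dep mn])
      then show ?thesis using D(2) by simp
    next
      case False
      then have "\<And>K. circ K \<Longrightarrow> card K \<le> 2" by fastforce
      then show ?thesis using small_circ[OF noF2 nc] by blast
    qed
  qed
qed

end

theorem lemma4p5:
  fixes M :: "'a matroid" and n :: nat
  assumes "matroid M"
    and "\<not> has_minor_iso M (dsum [U 1 1, U 1 3])"
    and "\<not> has_minor_iso M (dsum [U 0 1, U 2 3])"
    and "card (ground M) = n"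
  shows "(connected M \<and> sparse_paving M) \<or>
         (\<not> connected M \<and>
           ((\<exists>k l. k \<le> n \<and> l \<le> min k (n - k) \<and>
               iso M (dsum ([U 0 (n - k - l)] @ replicate l (U 1 2) @ [U (k - l) (k - l)]))) \<or>
            (\<exists>l. 3 \<le> l \<and> l \<le> n - 1 \<and> iso M (dsum [U 0 (n - l), U 1 l])) \<or>
            (\<exists>l. 3 \<le> l \<and> l \<le> n - 1 \<and> iso M (dsum [U (l - 1) l, U (n - l) (n - l)]))))"
proof -
  interpret mat M by (rule mat.intro) (rule assms(1))
  show ?thesis
  proof (cases "connected M")
    case True
    then show ?thesis using conn_sp[OF assms(3) assms(2) True] by blast
  next
    case False
    have "(\<exists>k l. k \<le> card E \<and> l \<le> min k (card E - k) \<and>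
            iso M (dsum ([U 0 (card E - k - l)] @ replicate l (U 1 2) @ [U (k - l) (k - l)]))) \<or>
         (\<exists>l. 3 \<le> l \<and> l \<le> card E - 1 \<and> iso M (dsum [U 0 (card E - l), U 1 l])) \<or>
         (\<exists>l. 3 \<le> l \<and> l \<le> card E - 1 \<and> iso M (dsum [U (l - 1) l, U (card E - l) (card E - l)]))"
      by (rule part1[OF assms(3) assms(2) False])
    then show ?thesis using False assms(4) by simp
  qed
qed


end
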